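(* Let $s\in\mathbb R$ and $0<\epsilon_0<1$ be fixed. For $N>0$ let $\phi_N$ be defined by $\hat\phi_N=N^{-3/2-s}(\chi_{D_{1,N}}+\chi_{D_{2,N}})$, and let $t_N=N^{-3-\epsilon_0}$. Then $\|\phi_N\|_{H^{s,0}}\sim1$ uniformly in $N\ge1$, and there exist $C>0$ and $N_0$ such that for all $N\ge N_0$, $$\|u_{2,N}(t_N)\|_{H^{s,0}}^2\ge C\,N^{-1-2\epsilon_0-2s},$$ where $u_{2,N}$ denotes the second iterate $u_2$ associated with $h=\phi_N$.
   Context: $D_{1,N}=[N/2,N]\times[-6N^2,6N^2]$ and $D_{2,N}=[N,2N]\times[\sqrt3N^2,(\sqrt3+1)N^2]$; $\chi_D$ is the indicator of $D$. $P(\xi,\eta)=\xi^3-\eta^2/\xi$. $W(t)$, $t\in\mathbb R$, is defined by $\mathcal F_{x,y}(W(t)h)(\xi,\eta)=\exp(itP(\xi,\eta)-\xi^2|t|)\hat h(\xi,\eta)$. For $h$ in $H^{s,0}$, the second iterate is $u_2(t)=-\int_0^tW(t-t')\,\partial_x\big[(W(t')h)^2\big]\,dt'$, $t\ge0$. $H^{s,0}(\mathbb R^2)$ has norm $\|u\|_{H^{s,0}}^2=\int_{\mathbb R^2}(1+\xi^2)^s|\hat u(\xi,\eta)|^2d\xi d\eta$, and $A\sim B$ means $C^{-1}B\le A\le CB$ for a constant $C$. *)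

theory Defs
  imports "HOL-Analysis.Analysis"
begin

definition FT :: "(real \<times> real \<Rightarrow> complex) \<Rightarrow> real \<times> real \<Rightarrow> complex" where
  "FT f \<xi> = integral\<^sup>L lborel (\<lambda>x. exp (- \<i> * complex_of_real (x \<bullet> \<xi>)) * f x)"

definition iFT :: "(real \<times> real \<Rightarrow> complex) \<Rightarrow> real \<times> real \<Rightarrow> complex" where
  "iFT g x = complex_of_real (1 / (4 * pi\<^sup>2)) *
      integral\<^sup>L lborel (\<lambda>\<xi>. exp (\<i> * complex_of_real (x \<bullet> \<xi>)) * g \<xi>)"

text \<open>The symbol P(xi,eta) = xi^3 - eta^2/xi (at xi = 0, a null set, HOL's division gives 0).\<close>
definition Psym :: "real \<times> real \<Rightarrow> real" where
  "Psym \<xi> = fst \<xi> ^ 3 - snd \<xi> ^ 2 / fst \<xi>"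

definition Wmult :: "real \<Rightarrow> real \<times> real \<Rightarrow> complex" where
  "Wmult t \<xi> = exp (\<i> * complex_of_real (t * Psym \<xi>) - complex_of_real (fst \<xi> ^ 2 * \<bar>t\<bar>))"

text \<open>Functions h are represented by their Fourier transform hh = \<hat>h.
  W(t)h in physical space:\<close>
definition W :: "real \<Rightarrow> (real \<times> real \<Rightarrow> complex) \<Rightarrow> real \<times> real \<Rightarrow> complex" where
  "W t hh = iFT (\<lambda>\<xi>. Wmult t \<xi> * hh \<xi>)"

text \<open>Fourier transform of the second iterate
  u_2(t) = - int_0^t W(t-t') d_x[(W(t')h)^2] dt', computed frequency-wise
  (d_x corresponds to multiplication by i xi).\<close>
definition u2_hat :: "(real \<times> real \<Rightarrow> complex) \<Rightarrow> real \<Rightarrow> real \<times> real \<Rightarrow> complex" where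
  "u2_hat hh t \<xi> = - set_lebesgue_integral lborel {0..t}
      (\<lambda>t'. Wmult (t - t') \<xi> * (\<i> * complex_of_real (fst \<xi>)) *
            FT (\<lambda>x. (W t' hh x)\<^sup>2) \<xi>)"

text \<open>H^{s,0} norm of the function whose Fourier transform is g.\<close>
definition Hs0_norm :: "real \<Rightarrow> (real \<times> real \<Rightarrow> complex) \<Rightarrow> real" where
  "Hs0_norm s g = sqrt (enn2real
      (\<integral>\<^sup>+ \<xi>. ennreal ((1 + fst \<xi> ^ 2) powr s * (cmod (g \<xi>))\<^sup>2) \<partial>lborel))"

definition D1 :: "real \<Rightarrow> (real \<times> real) set" where
  "D1 N = {N/2..N} \<times> {-6 * N\<^sup>2..6 * N\<^sup>2}"

definition D2 :: "real \<Rightarrow> (real \<times> real) set" where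
  "D2 N = {N..2*N} \<times> {sqrt 3 * N\<^sup>2..(sqrt 3 + 1) * N\<^sup>2}"

definition phi_hat :: "real \<Rightarrow> real \<Rightarrow> real \<times> real \<Rightarrow> complex" where
  "phi_hat s N \<xi> = complex_of_real (N powr (-3/2 - s) * (indicator (D1 N) \<xi> + indicator (D2 N) \<xi>))"

end

theory Submission
  imports Defs "HOL-Probability.Characteristic_Functions"
begin

lemma gauss1_std:
  "(\<integral>x. exp (\<i> * complex_of_real (t * x)) * complex_of_real (exp (- (x\<^sup>2) / 2)) \<partial>lborel)
     = complex_of_real (sqrt (2 * pi) * exp (- (t\<^sup>2) / 2))"
proof -
  have "char std_normal_distribution t = complex_of_real (exp (- (t^2) / 2))"
    by (simp add: char_std_normal_distribution)
  moreover have "char std_normal_distribution t = (\<integral>x. std_normal_density x *\<^sub>R exp (\<i> * complex_of_real (t * x)) \<partial>lborel)"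
    unfolding char_def by (subst integral_density) (auto simp: normal_density_nonneg)
  ultimately have "(\<integral>x. std_normal_density x *\<^sub>R exp (\<i> * complex_of_real (t * x)) \<partial>lborel) = complex_of_real (exp (- (t^2) / 2))"
    by simp
  then have "complex_of_real (sqrt (2*pi)) * (\<integral>x. std_normal_density x *\<^sub>R exp (\<i> * complex_of_real (t * x)) \<partial>lborel) = complex_of_real (sqrt (2 * pi) * exp (- (t\<^sup>2) / 2))"
    by simp
  also have "complex_of_real (sqrt (2*pi)) * (\<integral>x. std_normal_density x *\<^sub>R exp (\<i> * complex_of_real (t * x)) \<partial>lborel)
     = (\<integral>x. exp (\<i> * complex_of_real (t * x)) * complex_of_real (exp (- (x\<^sup>2) / 2)) \<partial>lborel)"
    unfolding integral_mult_right_zero[symmetric]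
    by (rule Bochner_Integration.integral_cong) (auto simp: std_normal_density_def scaleR_conv_of_real)
  finally show ?thesis by simp
qed

lemma integrable_gauss1_std: "integrable lborel (\<lambda>x::real. exp (- (x\<^sup>2) / 2))"
proof -
  have "integrable lborel (\<lambda>x. std_normal_density x)"
    using integrable_std_normal_moment[of 0] by simp
  then have "integrable lborel (\<lambda>x. sqrt (2*pi) * std_normal_density x)" by simp
  then show ?thesis by (simp add: std_normal_density_def)
qed

lemma gauss1:
  assumes r: "r > 0"
  shows "(\<integral>x. exp (\<i> * complex_of_real (a * x)) * complex_of_real (exp (- ((r * x)\<^sup>2) / 2)) \<partial>lborel)
     = complex_of_real (sqrt (2 * pi) / r * exp (- ((a / r)\<^sup>2) / 2))"
proof -
  let ?F = "\<lambda>y. exp (\<i> * complex_of_real ((a / r) * y)) * complex_of_real (exp (- (y\<^sup>2) / 2))"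
  have "(\<integral>y. ?F y \<partial>lborel) = \<bar>r\<bar> *\<^sub>R (\<integral>x. ?F (0 + r * x) \<partial>lborel)"
    using r by (intro lborel_integral_real_affine) simp
  also have "(\<lambda>x. ?F (0 + r * x)) = (\<lambda>x. exp (\<i> * complex_of_real (a * x)) * complex_of_real (exp (- ((r * x)\<^sup>2) / 2)))"
    using r by (auto simp: fun_eq_iff)
  finally have "complex_of_real (sqrt (2 * pi) * exp (- ((a / r)\<^sup>2) / 2)) = r *\<^sub>R (\<integral>x. exp (\<i> * complex_of_real (a * x)) * complex_of_real (exp (- ((r * x)\<^sup>2) / 2)) \<partial>lborel)"
    using r gauss1_std[of "a / r"] by simp
  then show ?thesis using r by (simp add: scaleR_conv_of_real field_simps)
qed

lemma integrable_gauss1: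
  assumes r: "r > 0"
  shows "integrable lborel (\<lambda>x::real. exp (- ((r * x)\<^sup>2) / 2))"
  using lborel_integrable_real_affine[OF integrable_gauss1_std, of r 0] r by simp

lemma integrable_gauss1c:
  assumes r: "r > 0"
  shows "integrable lborel (\<lambda>x::real. exp (\<i> * complex_of_real (a * x)) * complex_of_real (exp (- ((r * x)\<^sup>2) / 2)))"
  by (rule Bochner_Integration.integrable_bound[OF integrable_gauss1[OF r]]) (auto simp: norm_mult)

lemma pair_integrable_mult:
  fixes f :: "'a::euclidean_space \<Rightarrow> 'c::{real_normed_field,second_countable_topology,banach}"
    and g :: "'b::euclidean_space \<Rightarrow> 'c"
  assumes f: "integrable lborel f" and g: "integrable lborel g"
  shows "integrable (lborel \<Otimes>\<^sub>M lborel) (\<lambda>(x,y). f x * g y)"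
proof (rule lborel_pair.Fubini_integrable)
  have [measurable]: "f \<in> borel_measurable borel" "g \<in> borel_measurable borel"
    using f g by auto
  show "(\<lambda>(x, y). f x * g y) \<in> borel_measurable (lborel \<Otimes>\<^sub>M lborel)" by measurable
  have "(\<lambda>x. \<integral>y. norm (case (x, y) of (x, y) \<Rightarrow> f x * g y) \<partial>lborel) = (\<lambda>x. norm (f x) * (\<integral>y. norm (g y) \<partial>lborel))"
    by (auto simp: norm_mult)
  then show "integrable lborel (\<lambda>x. \<integral>y. norm (case (x, y) of (x, y) \<Rightarrow> f x * g y) \<partial>lborel)"
    using f by (simp add: integrable_norm)
  show "AE x in lborel. integrable lborel (\<lambda>y. case (x, y) of (x, y) \<Rightarrow> f x * g y)"
    using g by auto
qed

lemma pair_integral_mult: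
  fixes f :: "'a::euclidean_space \<Rightarrow> 'c::{real_normed_field,second_countable_topology,banach}"
    and g :: "'b::euclidean_space \<Rightarrow> 'c"
  assumes f: "integrable lborel f" and g: "integrable lborel g"
  shows "(\<integral>z. f (fst z) * g (snd z) \<partial>lborel) = integral\<^sup>L lborel f * integral\<^sup>L lborel g"
proof -
  have "(\<integral>z. f (fst z) * g (snd z) \<partial>lborel) = (\<integral>z. (\<lambda>(x,y). f x * g y) z \<partial>(lborel \<Otimes>\<^sub>M lborel))"
    by (simp add: lborel_prod case_prod_beta')
  also have "\<dots> = (\<integral>x. \<integral>y. f x * g y \<partial>lborel \<partial>lborel)"
    using lborel_pair.integral_fst[OF pair_integrable_mult[OF f g]] by simp
  also have "\<dots> = integral\<^sup>L lborel f * integral\<^sup>L lborel g"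
    by simp
  finally show ?thesis .
qed

lemma pair_integrable_mult':
  fixes f :: "'a::euclidean_space \<Rightarrow> 'c::{real_normed_field,second_countable_topology,banach}"
    and g :: "'b::euclidean_space \<Rightarrow> 'c"
  assumes f: "integrable lborel f" and g: "integrable lborel g"
  shows "integrable lborel (\<lambda>z. f (fst z) * g (snd z))"
  using pair_integrable_mult[OF f g] by (simp add: lborel_prod case_prod_beta')

definition gaussR :: "real \<Rightarrow> real \<times> real \<Rightarrow> real" where
  "gaussR r x = exp (- ((r * fst x)\<^sup>2 + (r * snd x)\<^sup>2) / 2)"

definition GamR :: "real \<Rightarrow> real \<times> real \<Rightarrow> real" where
  "GamR r a = 2 * pi / r\<^sup>2 * exp (- ((fst a / r)\<^sup>2 + (snd a / r)\<^sup>2) / 2)"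

lemma gaussR_real: "gaussR r x = exp (- ((r * fst x)\<^sup>2) / 2) * exp (- ((r * snd x)\<^sup>2) / 2)"
  unfolding gaussR_def exp_add[symmetric] by (rule arg_cong[where f=exp]) (simp add: field_simps)

lemma gaussR_split: "complex_of_real (gaussR r x) = complex_of_real (exp (- ((r * fst x)\<^sup>2) / 2)) * complex_of_real (exp (- ((r * snd x)\<^sup>2) / 2))"
  by (simp add: gaussR_real)

lemma integrable_gaussR: "r > 0 \<Longrightarrow> integrable lborel (gaussR r)"
  using pair_integrable_mult'[OF integrable_gauss1 integrable_gauss1, of r r]
  by (simp add: gaussR_real[abs_def])

lemma gauss2:
  assumes r: "r > 0"
  shows "(\<integral>x. exp (\<i> * complex_of_real (x \<bullet> a)) * complex_of_real (gaussR r x) \<partial>lborel)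
     = complex_of_real (GamR r a)"
proof -
  let ?F1 = "\<lambda>x. exp (\<i> * complex_of_real (fst a * x)) * complex_of_real (exp (- ((r * x)\<^sup>2) / 2))"
  let ?F2 = "\<lambda>x. exp (\<i> * complex_of_real (snd a * x)) * complex_of_real (exp (- ((r * x)\<^sup>2) / 2))"
  have "(\<lambda>x. exp (\<i> * complex_of_real (x \<bullet> a)) * complex_of_real (gaussR r x)) = (\<lambda>x. ?F1 (fst x) * ?F2 (snd x))"
    by (auto simp: fun_eq_iff gaussR_split inner_prod_def exp_add[symmetric] distrib_left mult.commute)
  then have "(\<integral>x. exp (\<i> * complex_of_real (x \<bullet> a)) * complex_of_real (gaussR r x) \<partial>lborel) = integral\<^sup>L lborel ?F1 * integral\<^sup>L lborel ?F2"
    using pair_integral_mult[OF integrable_gauss1c[OF r] integrable_gauss1c[OF r]] by simp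
  also have "\<dots> = complex_of_real (sqrt (2 * pi) / r * exp (- ((fst a / r)\<^sup>2) / 2) * (sqrt (2 * pi) / r * exp (- ((snd a / r)\<^sup>2) / 2)))"
    unfolding gauss1[OF r] by simp
  also have "sqrt (2 * pi) / r * exp (- ((fst a / r)\<^sup>2) / 2) * (sqrt (2 * pi) / r * exp (- ((snd a / r)\<^sup>2) / 2)) = GamR r a"
  proof -
    have "sqrt (2 * pi) * sqrt (2 * pi) = 2 * pi" by simp
    moreover have "exp (- ((fst a / r)\<^sup>2) / 2) * exp (- ((snd a / r)\<^sup>2) / 2) = exp (- ((fst a / r)\<^sup>2 + (snd a / r)\<^sup>2) / 2)"
      unfolding exp_add[symmetric] by (rule arg_cong[where f=exp]) (simp add: field_simps)
    moreover have "sqrt (2 * pi) / r * exp (- ((fst a / r)\<^sup>2) / 2) * (sqrt (2 * pi) / r * exp (- ((snd a / r)\<^sup>2) / 2))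
       = (sqrt (2 * pi) * sqrt (2 * pi)) / r\<^sup>2 * (exp (- ((fst a / r)\<^sup>2) / 2) * exp (- ((snd a / r)\<^sup>2) / 2))"
      by (simp add: power2_eq_square)
    ultimately show ?thesis unfolding GamR_def by simp
  qed
  finally show ?thesis .
qed

lemma integrable_gauss2:
  assumes r: "r > 0"
  shows "integrable lborel (\<lambda>x. exp (\<i> * complex_of_real (x \<bullet> a)) * complex_of_real (gaussR r x))"
proof (rule Bochner_Integration.integrable_bound[OF integrable_gaussR[OF r]])
  show "(\<lambda>x. exp (\<i> * complex_of_real (x \<bullet> a)) * complex_of_real (gaussR r x)) \<in> borel_measurable lborel"
    unfolding gaussR_def by (simp, intro borel_measurable_continuous_onI continuous_intros; simp)
qed (auto simp: norm_mult gaussR_def)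

type_synonym R2 = "real \<times> real"

lemma gaussR_pos: "gaussR r x > 0" by (simp add: gaussR_def)
lemma GamR_pos: "r > 0 \<Longrightarrow> GamR r x > 0" by (simp add: GamR_def)

lemma gaussR_meas[measurable]: "gaussR r \<in> borel_measurable borel"
  unfolding gaussR_def by (intro borel_measurable_continuous_onI continuous_intros; simp)
lemma GamR_meas[measurable]: "GamR r \<in> borel_measurable borel"
proof (cases "r = 0")
  case True
  then have "GamR r = (\<lambda>_. 0)" by (simp add: GamR_def fun_eq_iff)
  then show ?thesis by simp
next
  case False
  then show ?thesis
    unfolding GamR_def by (intro borel_measurable_continuous_onI continuous_intros; simp)
qed
lemma gaussR_meas'[measurable]: "gaussR r \<in> borel_measurable lborel"
  by simp
lemma GamR_meas'[measurable]: "GamR r \<in> borel_measurable lborel"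
  by simp

lemma triple:
  fixes g1 g2 :: "R2 \<Rightarrow> complex" and b :: R2 and s1 s2 r :: real
  assumes r: "r > 0"
    and g1m[measurable]: "g1 \<in> borel_measurable borel" and g1i: "integrable lborel g1"
    and g2m[measurable]: "g2 \<in> borel_measurable borel" and g2i: "integrable lborel g2"
  shows "(\<integral>x. exp (\<i> * complex_of_real (x \<bullet> b)) * complex_of_real (gaussR r x) *
            ((\<integral>z. exp (\<i> * complex_of_real (s1 * (x \<bullet> z))) * g1 z \<partial>lborel) *
             (\<integral>w. exp (\<i> * complex_of_real (s2 * (x \<bullet> w))) * g2 w \<partial>lborel)) \<partial>lborel)
       = (\<integral>z. \<integral>w. g1 z * g2 w * complex_of_real (GamR r (b + s1 *\<^sub>R z + s2 *\<^sub>R w)) \<partial>lborel \<partial>lborel)"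
proof -
  have g1m'[measurable]: "g1 \<in> borel_measurable lborel" and g2m'[measurable]: "g2 \<in> borel_measurable lborel" by simp_all
  define E where "E x = exp (\<i> * complex_of_real (x \<bullet> b)) * complex_of_real (gaussR r x)" for x :: R2
  define A2 where "A2 x = (\<integral>w. exp (\<i> * complex_of_real (s2 * (x \<bullet> w))) * g2 w \<partial>lborel)" for x :: R2
  define H where "H x z = E x * (exp (\<i> * complex_of_real (s1 * (x \<bullet> z))) * g1 z) * A2 x" for x z :: R2
  define Phi where "Phi z x w = E x * (exp (\<i> * complex_of_real (s1 * (x \<bullet> z))) * g1 z) * (exp (\<i> * complex_of_real (s2 * (x \<bullet> w))) * g2 w)" for x z w :: R2
  have Em[measurable]: "E \<in> borel_measurable borel" unfolding E_def by measurable
  have Em'[measurable]: "E \<in> borel_measurable lborel" by simp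
  have A2m[measurable]: "A2 \<in> borel_measurable borel"
  proof -
    have "(\<lambda>x. \<integral>w. exp (\<i> * complex_of_real (s2 * (x \<bullet> w))) * g2 w \<partial>lborel) \<in> borel_measurable lborel"
      by (rule lborel.borel_measurable_lebesgue_integral) measurable
    then show ?thesis unfolding A2_def by simp
  qed
  have A2m'[measurable]: "A2 \<in> borel_measurable lborel" by simp
  have nE: "norm (E x) = gaussR r x" for x unfolding E_def by (simp add: norm_mult gaussR_def)
  have nA2: "norm (A2 x) \<le> (\<integral>w. norm (g2 w) \<partial>lborel)" for x
  proof -
    have "norm (A2 x) \<le> (\<integral>w. norm (exp (\<i> * complex_of_real (s2 * (x \<bullet> w))) * g2 w) \<partial>lborel)"
      unfolding A2_def by (rule integral_norm_bound)
    also have "\<dots> = (\<integral>w. norm (g2 w) \<partial>lborel)" by (simp add: norm_mult)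
    finally show ?thesis .
  qed
  have s1: "E x * ((\<integral>z. exp (\<i> * complex_of_real (s1 * (x \<bullet> z))) * g1 z \<partial>lborel) * A2 x) = (\<integral>z. H x z \<partial>lborel)" for x
    unfolding H_def by simp
  have s1': "H x z = (\<integral>w. Phi z x w \<partial>lborel)" for x z
    unfolding H_def Phi_def A2_def by simp
  have intH: "integrable (lborel \<Otimes>\<^sub>M lborel) (\<lambda>(x, z). H x z)"
  proof (rule Bochner_Integration.integrable_bound)
    show "integrable (lborel \<Otimes>\<^sub>M lborel) (\<lambda>(x, z). gaussR r x * (norm (g1 z) * (\<integral>w. norm (g2 w) \<partial>lborel)))"
      by (rule pair_integrable_mult) (auto intro: integrable_gaussR[OF r] g1i)
    show "(\<lambda>(x, z). H x z) \<in> borel_measurable (lborel \<Otimes>\<^sub>M lborel)"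
      unfolding H_def by measurable
    show "AE xz in lborel \<Otimes>\<^sub>M lborel. norm (case xz of (x, z) \<Rightarrow> H x z) \<le> norm (case xz of (x, z) \<Rightarrow> gaussR r x * (norm (g1 z) * (\<integral>w. norm (g2 w) \<partial>lborel)))"
    proof (intro AE_I2, clarify)
      fix x z :: R2
      have "norm (H x z) = gaussR r x * (norm (g1 z) * norm (A2 x))"
        unfolding H_def by (simp add: norm_mult nE)
      also have "\<dots> \<le> gaussR r x * (norm (g1 z) * (\<integral>w. norm (g2 w) \<partial>lborel))"
        by (intro mult_left_mono nA2) (auto simp: less_imp_le[OF gaussR_pos])
      finally show "norm (H x z) \<le> norm (gaussR r x * (norm (g1 z) * (\<integral>w. norm (g2 w) \<partial>lborel)))"
        by (simp add: abs_mult less_imp_le[OF gaussR_pos])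
    qed
  qed
  have s2: "(\<integral>x. \<integral>z. H x z \<partial>lborel \<partial>lborel) = (\<integral>z. \<integral>x. H x z \<partial>lborel \<partial>lborel)"
    using lborel_pair.Fubini_integral[OF intH] by simp
  have s3: "(\<integral>x. H x z \<partial>lborel) = (\<integral>w. \<integral>x. Phi z x w \<partial>lborel \<partial>lborel)" for z
  proof -
    have intP: "integrable (lborel \<Otimes>\<^sub>M lborel) (\<lambda>(x, w). Phi z x w)"
    proof (rule Bochner_Integration.integrable_bound)
      show "integrable (lborel \<Otimes>\<^sub>M lborel) (\<lambda>(x, w). (gaussR r x * norm (g1 z)) * norm (g2 w))"
        by (rule pair_integrable_mult) (auto intro: integrable_gaussR[OF r] g2i)
      show "(\<lambda>(x, w). Phi z x w) \<in> borel_measurable (lborel \<Otimes>\<^sub>M lborel)"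
        unfolding Phi_def by measurable
      show "AE xw in lborel \<Otimes>\<^sub>M lborel. norm (case xw of (x, w) \<Rightarrow> Phi z x w) \<le> norm (case xw of (x, w) \<Rightarrow> (gaussR r x * norm (g1 z)) * norm (g2 w))"
        by (intro AE_I2) (auto simp: Phi_def norm_mult nE abs_mult less_imp_le[OF gaussR_pos])
    qed
    show ?thesis
      unfolding s1' using lborel_pair.Fubini_integral[OF intP] by simp
  qed
  have s4: "(\<integral>x. Phi z x w \<partial>lborel) = g1 z * g2 w * complex_of_real (GamR r (b + s1 *\<^sub>R z + s2 *\<^sub>R w))" for z w
  proof -
    have "Phi z x w = (g1 z * g2 w) * (exp (\<i> * complex_of_real (x \<bullet> (b + s1 *\<^sub>R z + s2 *\<^sub>R w))) * complex_of_real (gaussR r x))" for x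
      unfolding Phi_def E_def
      by (simp add: inner_add_right exp_add[symmetric] distrib_left algebra_simps)
    then have "(\<integral>x. Phi z x w \<partial>lborel) = (g1 z * g2 w) * (\<integral>x. exp (\<i> * complex_of_real (x \<bullet> (b + s1 *\<^sub>R z + s2 *\<^sub>R w))) * complex_of_real (gaussR r x) \<partial>lborel)"
      by simp
    then show ?thesis using gauss2[OF r] by simp
  qed
  have "(\<integral>x. exp (\<i> * complex_of_real (x \<bullet> b)) * complex_of_real (gaussR r x) *
            ((\<integral>z. exp (\<i> * complex_of_real (s1 * (x \<bullet> z))) * g1 z \<partial>lborel) *
             (\<integral>w. exp (\<i> * complex_of_real (s2 * (x \<bullet> w))) * g2 w \<partial>lborel)) \<partial>lborel)
      = (\<integral>x. \<integral>z. H x z \<partial>lborel \<partial>lborel)"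
    using s1 unfolding E_def A2_def by (simp add: mult.assoc)
  also have "\<dots> = (\<integral>z. \<integral>w. \<integral>x. Phi z x w \<partial>lborel \<partial>lborel \<partial>lborel)"
    unfolding s2 s3 ..
  also have "\<dots> = (\<integral>z. \<integral>w. g1 z * g2 w * complex_of_real (GamR r (b + s1 *\<^sub>R z + s2 *\<^sub>R w)) \<partial>lborel \<partial>lborel)"
    unfolding s4 ..
  finally show ?thesis .
qed

lemma norm_integral_le:
  fixes f :: "'a \<Rightarrow> 'b::{banach,second_countable_topology}"
  assumes "integrable M g" "\<And>x. norm (f x) \<le> g x"
  shows "norm (integral\<^sup>L M f) \<le> integral\<^sup>L M g"
proof -
  have "norm (integral\<^sup>L M f) \<le> (\<integral>x. norm (f x) \<partial>M)" by (rule integral_norm_bound)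
  also have "\<dots> \<le> integral\<^sup>L M g"
    using assms by (intro integral_mono') (auto intro: order_trans[OF norm_ge_zero])
  finally show ?thesis .
qed

lemma nn_integral_affine2:
  fixes f :: "R2 \<Rightarrow> ennreal" and c :: real
  assumes [measurable]: "f \<in> borel_measurable borel" and c: "c \<noteq> 0"
  shows "(\<integral>\<^sup>+x. f x \<partial>lborel) = ennreal (\<bar>c\<bar>^2) * (\<integral>\<^sup>+x. f (t + c *\<^sub>R x) \<partial>lborel)"
  by (subst lborel_affine[OF c, of t])
     (simp add: nn_integral_density nn_integral_distr nn_integral_cmult power2_eq_square)

lemma integrable_affine2:
  fixes f :: "R2 \<Rightarrow> 'a :: {banach, second_countable_topology}"
  assumes f: "integrable lborel f" and c: "c \<noteq> 0"
  shows "integrable lborel (\<lambda>x. f (t + c *\<^sub>R x))"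
proof -
  have [measurable]: "f \<in> borel_measurable borel" using f by auto
  show ?thesis
    using f unfolding integrable_iff_bounded
    by (subst (asm) nn_integral_affine2[where c=c and t=t]) (auto simp: ennreal_mult_less_top c)
qed

lemma integrable_affine2_iff:
  fixes f :: "R2 \<Rightarrow> 'a :: {banach, second_countable_topology}"
  assumes c: "c \<noteq> 0"
  shows "integrable lborel (\<lambda>x. f (t + c *\<^sub>R x)) \<longleftrightarrow> integrable lborel f"
proof
  assume "integrable lborel (\<lambda>x. f (t + c *\<^sub>R x))"
  from integrable_affine2[OF this, of "1/c" "- t /\<^sub>R c"] c show "integrable lborel f"
    by (simp add: algebra_simps)
qed (rule integrable_affine2[OF _ c])

lemma integral_affine2:
  fixes f :: "R2 \<Rightarrow> 'a :: {banach, second_countable_topology}" and c :: real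
  assumes c: "c \<noteq> 0"
  shows "(\<integral>x. f x \<partial>lborel) = (\<bar>c\<bar>^2) *\<^sub>R (\<integral>x. f (t + c *\<^sub>R x) \<partial>lborel)"
proof cases
  assume f[measurable]: "integrable lborel f"
  then have [measurable]: "f \<in> borel_measurable borel" by auto
  show ?thesis
    using c f integrable_affine2[OF f c, of t]
    by (subst lborel_affine[OF c, of t]) (simp add: integral_density integral_distr power2_eq_square)
next
  assume "\<not> integrable lborel f" with c show ?thesis
    by (simp add: integrable_affine2_iff not_integrable_integral_eq)
qed

lemma gaussR_1_integral: "(\<integral>x. gaussR 1 x \<partial>lborel) = 2 * pi"
proof -
  have "complex_of_real (\<integral>x. gaussR 1 x \<partial>lborel) = (\<integral>x. exp (\<i> * complex_of_real (x \<bullet> 0)) * complex_of_real (gaussR 1 x) \<partial>lborel)"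
    by simp
  also have "\<dots> = complex_of_real (GamR 1 0)" by (rule gauss2) simp
  also have "\<dots> = complex_of_real (2 * pi)" by (simp add: GamR_def)
  finally show ?thesis by (simp only: of_real_eq_iff)
qed

lemma GamR_scale: "r > 0 \<Longrightarrow> GamR r (r *\<^sub>R w) = 2 * pi / r\<^sup>2 * gaussR 1 w"
  by (simp add: GamR_def gaussR_def)

lemma GamR_even: "GamR r (- a) = GamR r a"
  by (simp add: GamR_def power2_eq_square)

lemma integrable_GamR_shift:
  assumes r: "r > 0"
  shows "integrable lborel (\<lambda>z. GamR r (z - v))"
proof -
  have "integrable lborel (\<lambda>w. 2 * pi / r\<^sup>2 * gaussR 1 w)"
    using integrable_gaussR[of 1] by simp
  then have "integrable lborel (\<lambda>w. GamR r ((v + r *\<^sub>R w) - v))"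
    using r by (simp add: GamR_scale)
  then show ?thesis using integrable_affine2_iff[of r "\<lambda>z. GamR r (z - v)" v] r by simp
qed

lemma integral_GamR_shift:
  assumes r: "r > 0"
  shows "(\<integral>z. GamR r (z - v) \<partial>lborel) = 4 * pi\<^sup>2"
proof -
  have "(\<integral>z. GamR r (z - v) \<partial>lborel) = (\<bar>r\<bar>^2) *\<^sub>R (\<integral>w. GamR r ((v + r *\<^sub>R w) - v) \<partial>lborel)"
    using integral_affine2[where c=r and t=v and f="\<lambda>z. GamR r (z - v)"] r by simp
  also have "\<dots> = r^2 * (\<integral>w. 2 * pi / r\<^sup>2 * gaussR 1 w \<partial>lborel)"
    using r by (simp add: GamR_scale)
  also have "\<dots> = 4 * pi\<^sup>2" using r by (simp add: gaussR_1_integral power2_eq_square)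
  finally show ?thesis .
qed

lemma approx_identity:
  fixes g :: "R2 \<Rightarrow> complex"
  assumes gm[measurable]: "g \<in> borel_measurable borel" and gb: "\<And>v. norm (g v) \<le> M"
    and cont: "isCont g v"
  shows "(\<lambda>n. \<integral>z. g z * complex_of_real (GamR (1 / (Suc n)) (z - v)) \<partial>lborel) \<longlonglongrightarrow> complex_of_real (4 * pi\<^sup>2) * g v"
proof -
  define r where "r n = 1 / real (Suc n)" for n
  have r: "r n > 0" for n by (simp add: r_def)
  have eq: "(\<integral>z. g z * complex_of_real (GamR (r n) (z - v)) \<partial>lborel) = (\<integral>w. g (v + r n *\<^sub>R w) * complex_of_real (2 * pi * gaussR 1 w) \<partial>lborel)" for n
  proof -
    have "(\<integral>z. g z * complex_of_real (GamR (r n) (z - v)) \<partial>lborel) = (\<bar>r n\<bar>^2) *\<^sub>R (\<integral>w. g (v + r n *\<^sub>R w) * complex_of_real (GamR (r n) ((v + r n *\<^sub>R w) - v)) \<partial>lborel)"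
      using r[of n] by (intro integral_affine2) simp
    also have "\<dots> = (\<integral>w. g (v + r n *\<^sub>R w) * complex_of_real (2 * pi * gaussR 1 w) \<partial>lborel)"
      using r[of n] by (simp add: GamR_scale scaleR_conv_of_real power2_eq_square field_simps)
    finally show ?thesis .
  qed
  have "(\<lambda>n. \<integral>w. g (v + r n *\<^sub>R w) * complex_of_real (2 * pi * gaussR 1 w) \<partial>lborel) \<longlonglongrightarrow> (\<integral>w. g v * complex_of_real (2 * pi * gaussR 1 w) \<partial>lborel)"
  proof (rule integral_dominated_convergence[where w="\<lambda>w. M * (2 * pi * gaussR 1 w)"])
    show "(\<lambda>w. g v * complex_of_real (2 * pi * gaussR 1 w)) \<in> borel_measurable lborel" by measurable
    show "(\<lambda>w. g (v + r n *\<^sub>R w) * complex_of_real (2 * pi * gaussR 1 w)) \<in> borel_measurable lborel" for n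
      by measurable
    show "integrable lborel (\<lambda>w. M * (2 * pi * gaussR 1 w))"
      using integrable_gaussR[of 1] by simp
    show "AE w in lborel. (\<lambda>n. g (v + r n *\<^sub>R w) * complex_of_real (2 * pi * gaussR 1 w)) \<longlonglongrightarrow> g v * complex_of_real (2 * pi * gaussR 1 w)"
    proof (intro AE_I2 tendsto_mult tendsto_const)
      fix w
      have "(\<lambda>n. r n) \<longlonglongrightarrow> 0" unfolding r_def using LIMSEQ_inverse_real_of_nat
        by (simp add: inverse_eq_divide)
      then have "(\<lambda>n. v + r n *\<^sub>R w) \<longlonglongrightarrow> v + 0 *\<^sub>R w"
        by (intro tendsto_intros)
      then show "(\<lambda>n. g (v + r n *\<^sub>R w)) \<longlonglongrightarrow> g v"
        using cont isCont_tendsto_compose by fastforce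
    qed
    show "AE w in lborel. norm (g (v + r n *\<^sub>R w) * complex_of_real (2 * pi * gaussR 1 w)) \<le> M * (2 * pi * gaussR 1 w)" for n
      by (intro AE_I2) (auto simp: norm_mult abs_mult less_imp_le[OF gaussR_pos] gb intro!: mult_right_mono)
  qed
  also have "(\<integral>w. g v * complex_of_real (2 * pi * gaussR 1 w) \<partial>lborel) = complex_of_real (4 * pi\<^sup>2) * g v"
    by (simp add: gaussR_1_integral power2_eq_square)
  finally show ?thesis using eq unfolding r_def by simp
qed

lemma gaussR_le1: "gaussR r x \<le> 1"
  by (simp add: gaussR_def)

lemma gaussR_mono: "0 \<le> r \<Longrightarrow> r \<le> r' \<Longrightarrow> gaussR r' x \<le> gaussR r x"
proof -
  assume h: "0 \<le> r" "r \<le> r'"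
  have "r\<^sup>2 \<le> r'\<^sup>2" using h by (intro power_mono) auto
  then have "(r * fst x)\<^sup>2 \<le> (r' * fst x)\<^sup>2" "(r * snd x)\<^sup>2 \<le> (r' * snd x)\<^sup>2"
    by (auto simp: power_mult_distrib intro: mult_right_mono)
  then show ?thesis unfolding gaussR_def by simp
qed

lemma gaussR_lim: "(\<lambda>n. gaussR (1 / real (Suc n)) x) \<longlonglongrightarrow> 1"
proof -
  have "(\<lambda>n. 1 / real (Suc n)) \<longlonglongrightarrow> 0"
    using LIMSEQ_inverse_real_of_nat by (simp add: inverse_eq_divide)
  then have "(\<lambda>n. gaussR (1 / real (Suc n)) x) \<longlonglongrightarrow> exp (- ((0 * fst x)\<^sup>2 + (0 * snd x)\<^sup>2) / 2)"
    unfolding gaussR_def by (intro tendsto_intros) auto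
  then show ?thesis by simp
qed

locale gfun =
  fixes g :: "R2 \<Rightarrow> complex" and M :: real
  assumes gm[measurable]: "g \<in> borel_measurable borel" and gi: "integrable lborel g"
    and gb: "\<And>v. norm (g v) \<le> M"
begin

definition a :: "R2 \<Rightarrow> complex" where
  "a x = (\<integral>z. exp (\<i> * complex_of_real (x \<bullet> z)) * g z \<partial>lborel)"

definition L :: real where "L = (\<integral>z. norm (g z) \<partial>lborel)"

lemma gm'[measurable]: "g \<in> borel_measurable lborel" by simp

lemma M_nonneg: "0 \<le> M" using gb[of 0] norm_ge_zero order_trans by blast

lemma L_nonneg: "0 \<le> L" unfolding L_def by simp

lemma am[measurable]: "a \<in> borel_measurable borel"
proof -
  have "(\<lambda>x. \<integral>z. exp (\<i> * complex_of_real (x \<bullet> z)) * g z \<partial>lborel) \<in> borel_measurable lborel"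
    by (rule lborel.borel_measurable_lebesgue_integral) measurable
  then show ?thesis unfolding a_def[abs_def] by simp
qed

lemma am'[measurable]: "a \<in> borel_measurable lborel" by simp

lemma an: "norm (a x) \<le> L"
  unfolding a_def L_def
  by (rule norm_integral_le) (auto simp: norm_mult gi)

lemma iFT_a: "iFT g x = complex_of_real (1 / (4 * pi\<^sup>2)) * a x"
  unfolding iFT_def a_def by simp

lemma a_cnj: "cnj (a x) = (\<integral>w. exp (\<i> * complex_of_real (- 1 * (x \<bullet> w))) * cnj (g w) \<partial>lborel)"
proof -
  have "(\<integral>w. exp (\<i> * complex_of_real (- 1 * (x \<bullet> w))) * cnj (g w) \<partial>lborel) = (\<integral>w. cnj (exp (\<i> * complex_of_real (x \<bullet> w)) * g w) \<partial>lborel)"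
    by (rule Bochner_Integration.integral_cong) (auto simp: exp_cnj)
  then show ?thesis unfolding a_def by (simp only: Bochner_Integration.integral_cnj)
qed

lemma gaussR_a_bound:
  assumes r: "r > 0"
  shows "\<bar>\<integral>x. gaussR r x * (norm (a x))\<^sup>2 \<partial>lborel\<bar> \<le> L * M * (4 * pi\<^sup>2)"
proof -
  have cm[measurable]: "(\<lambda>w. cnj (g w)) \<in> borel_measurable borel"
    using measurable_compose[OF gm borel_measurable_continuous_onI[OF continuous_on_cnj[OF continuous_on_id]]] by simp
  have ci: "integrable lborel (\<lambda>w. cnj (g w))" using gi by simp
  have T: "(\<integral>x. exp (\<i> * complex_of_real (x \<bullet> 0)) * complex_of_real (gaussR r x) *
            ((\<integral>z. exp (\<i> * complex_of_real (1 * (x \<bullet> z))) * g z \<partial>lborel) *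
             (\<integral>w. exp (\<i> * complex_of_real (- 1 * (x \<bullet> w))) * cnj (g w) \<partial>lborel)) \<partial>lborel)
       = (\<integral>z. \<integral>w. g z * cnj (g w) * complex_of_real (GamR r (0 + 1 *\<^sub>R z + (- 1) *\<^sub>R w)) \<partial>lborel \<partial>lborel)"
    by (rule triple[OF r gm gi cm ci])
  have lhs: "exp (\<i> * complex_of_real (x \<bullet> 0)) * complex_of_real (gaussR r x) *
            ((\<integral>z. exp (\<i> * complex_of_real (1 * (x \<bullet> z))) * g z \<partial>lborel) *
             (\<integral>w. exp (\<i> * complex_of_real (- 1 * (x \<bullet> w))) * cnj (g w) \<partial>lborel))
        = complex_of_real (gaussR r x * (norm (a x))\<^sup>2)" for x
  proof -
    have "a x * cnj (a x) = complex_of_real ((norm (a x))\<^sup>2)"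
      by (rule complex_norm_square[symmetric])
    then show ?thesis
      unfolding a_cnj[symmetric] by (simp add: a_def[symmetric])
  qed
  have inner: "norm (\<integral>w. g z * cnj (g w) * complex_of_real (GamR r (0 + 1 *\<^sub>R z + (- 1) *\<^sub>R w)) \<partial>lborel)
      \<le> norm (g z) * (M * (4 * pi\<^sup>2))" for z
  proof -
    have "norm (\<integral>w. g z * cnj (g w) * complex_of_real (GamR r (0 + 1 *\<^sub>R z + (- 1) *\<^sub>R w)) \<partial>lborel)
        \<le> (\<integral>w. norm (g z) * M * GamR r (w - z) \<partial>lborel)"
    proof (rule norm_integral_le)
      show "integrable lborel (\<lambda>w. norm (g z) * M * GamR r (w - z))"
        using integrable_GamR_shift[OF r, of z] by simp
      fix w
      have "GamR r (0 + 1 *\<^sub>R z + (- 1) *\<^sub>R w) = GamR r (w - z)"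
        using GamR_even[of r "w - z"] by simp
      then show "norm (g z * cnj (g w) * complex_of_real (GamR r (0 + 1 *\<^sub>R z + (- 1) *\<^sub>R w))) \<le> norm (g z) * M * GamR r (w - z)"
        using GamR_pos[OF r, of "w - z"] gb[of w]
        by (simp add: norm_mult abs_of_pos mult_right_mono mult_left_mono)
    qed
    also have "\<dots> = norm (g z) * (M * (4 * pi\<^sup>2))"
      using integral_GamR_shift[OF r, of z] by simp
    finally show ?thesis .
  qed
  have "norm (\<integral>z. \<integral>w. g z * cnj (g w) * complex_of_real (GamR r (0 + 1 *\<^sub>R z + (- 1) *\<^sub>R w)) \<partial>lborel \<partial>lborel)
      \<le> (\<integral>z. norm (g z) * (M * (4 * pi\<^sup>2)) \<partial>lborel)"
    by (rule norm_integral_le[OF _ inner]) (simp add: gi)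
  also have "\<dots> = L * M * (4 * pi\<^sup>2)" unfolding L_def by simp
  finally have "norm (\<integral>x. complex_of_real (gaussR r x * (norm (a x))\<^sup>2) \<partial>lborel) \<le> L * M * (4 * pi\<^sup>2)"
    using T unfolding lhs by simp
  then show ?thesis by (simp only: integral_complex_of_real norm_of_real)
qed

lemma a_L2: "(\<integral>\<^sup>+x. ennreal ((norm (a x))\<^sup>2) \<partial>lborel) \<le> ennreal (L * M * (4 * pi\<^sup>2))"
proof -
  define f where "f n x = ennreal (gaussR (1 / real (Suc n)) x * (norm (a x))\<^sup>2)" for n x
  have inc: "incseq f"
    unfolding f_def incseq_def le_fun_def
    by (auto intro!: ennreal_leI mult_right_mono gaussR_mono simp: frac_le)
  have fm: "f n \<in> borel_measurable lborel" for n unfolding f_def by measurable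
  have lim: "(\<lambda>n. f n x) \<longlonglongrightarrow> ennreal ((norm (a x))\<^sup>2)" for x
    unfolding f_def using gaussR_lim[of x] by (intro tendsto_ennrealI) (auto intro!: tendsto_eq_intros)
  have "(\<lambda>n. integral\<^sup>N lborel (f n)) \<longlonglongrightarrow> (\<integral>\<^sup>+x. ennreal ((norm (a x))\<^sup>2) \<partial>lborel)"
    by (rule nn_integral_LIMSEQ[OF inc fm lim])
  moreover have "integral\<^sup>N lborel (f n) \<le> ennreal (L * M * (4 * pi\<^sup>2))" for n
  proof -
    let ?r = "1 / real (Suc n)"
    have r: "?r > 0" by simp
    have int: "integrable lborel (\<lambda>x. gaussR ?r x * (norm (a x))\<^sup>2)"
    proof (rule Bochner_Integration.integrable_bound)
      show "integrable lborel (\<lambda>x. gaussR ?r x * L\<^sup>2)" using integrable_gaussR[OF r] by simp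
      show "(\<lambda>x. gaussR ?r x * (norm (a x))\<^sup>2) \<in> borel_measurable lborel" by measurable
      show "AE x in lborel. norm (gaussR ?r x * (norm (a x))\<^sup>2) \<le> norm (gaussR ?r x * L\<^sup>2)"
        using an by (intro AE_I2) (auto simp: abs_mult less_imp_le[OF gaussR_pos] intro!: mult_left_mono power_mono)
    qed
    have "integral\<^sup>N lborel (f n) = ennreal (\<integral>x. gaussR ?r x * (norm (a x))\<^sup>2 \<partial>lborel)"
      unfolding f_def by (rule nn_integral_eq_integral[OF int]) (auto simp: less_imp_le[OF gaussR_pos])
    also have "\<dots> \<le> ennreal (L * M * (4 * pi\<^sup>2))"
      using gaussR_a_bound[OF r] by (intro ennreal_leI) auto
    finally show ?thesis .
  qed
  ultimately show ?thesis using LIMSEQ_le_const2 by blast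
qed

lemma a_sq_integrable: "integrable lborel (\<lambda>x. h x * (a x * a x))"
  if hm: "h \<in> borel_measurable lborel" and hb: "\<And>x. norm (h x) \<le> 1" for h :: "R2 \<Rightarrow> complex"
proof (rule integrableI_bounded)
  show "(\<lambda>x. h x * (a x * a x)) \<in> borel_measurable lborel" using hm by measurable
  have "(\<integral>\<^sup>+x. ennreal (norm (h x * (a x * a x))) \<partial>lborel) \<le> (\<integral>\<^sup>+x. ennreal ((norm (a x))\<^sup>2) \<partial>lborel)"
    using hb by (intro nn_integral_mono ennreal_leI) (auto simp: norm_mult power2_eq_square intro!: mult_left_le_one_le)
  also have "\<dots> < \<infinity>" using a_L2 by (rule le_less_trans) simp
  finally show "(\<integral>\<^sup>+x. ennreal (norm (h x * (a x * a x))) \<partial>lborel) < \<infinity>" .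
qed

end

context gfun
begin

lemma a_sq_int: "integrable lborel (\<lambda>x. (norm (a x))\<^sup>2)"
proof -
  have "integrable lborel (\<lambda>x. 1 * (a x * a x))" by (rule a_sq_integrable) auto
  then have "integrable lborel (\<lambda>x. norm (1 * (a x * a x)))" by (rule integrable_norm)
  then show ?thesis by (simp add: norm_mult power2_eq_square)
qed

theorem FT_sq:
  assumes cont: "AE z in lborel. isCont g (\<xi> - z)"
  shows "FT (\<lambda>x. (iFT g x)\<^sup>2) \<xi> = complex_of_real (1 / (4 * pi\<^sup>2)) * (\<integral>z. g z * g (\<xi> - z) \<partial>lborel)"
proof -
  define c0 where "c0 = complex_of_real (1 / (4 * pi\<^sup>2))"
  define e where "e x = exp (- \<i> * complex_of_real (x \<bullet> \<xi>))" for x :: R2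
  define r where "r n = 1 / real (Suc n)" for n
  have r: "r n > 0" for n by (simp add: r_def)
  have em[measurable]: "e \<in> borel_measurable lborel" unfolding e_def by measurable
  have ne: "norm (e x) = 1" for x unfolding e_def by simp
  have e_eq: "e x = exp (\<i> * complex_of_real (x \<bullet> (- \<xi>)))" for x unfolding e_def by simp
  have FT_eq: "FT (\<lambda>x. (iFT g x)\<^sup>2) \<xi> = c0 * c0 * (\<integral>x. e x * (a x * a x) \<partial>lborel)"
  proof -
    have "FT (\<lambda>x. (iFT g x)\<^sup>2) \<xi> = (\<integral>x. (c0 * c0) * (e x * (a x * a x)) \<partial>lborel)"
      unfolding FT_def e_def c0_def iFT_a
      by (rule Bochner_Integration.integral_cong) (auto simp: power2_eq_square)
    then show ?thesis by simp
  qed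
  define S where "S n = (\<integral>x. e x * complex_of_real (gaussR (r n) x) * (a x * a x) \<partial>lborel)" for n
  have S_lim: "S \<longlonglongrightarrow> (\<integral>x. e x * (a x * a x) \<partial>lborel)"
    unfolding S_def
  proof (rule integral_dominated_convergence[where w="\<lambda>x. (norm (a x))\<^sup>2"])
    show "(\<lambda>x. e x * (a x * a x)) \<in> borel_measurable lborel" by measurable
    show "(\<lambda>x. e x * complex_of_real (gaussR (r n) x) * (a x * a x)) \<in> borel_measurable lborel" for n
      by measurable
    show "integrable lborel (\<lambda>x. (norm (a x))\<^sup>2)" by (rule a_sq_int)
    show "AE x in lborel. (\<lambda>n. e x * complex_of_real (gaussR (r n) x) * (a x * a x)) \<longlonglongrightarrow> e x * (a x * a x)"
    proof (intro AE_I2)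
      fix x
      have "(\<lambda>n. e x * complex_of_real (gaussR (r n) x) * (a x * a x)) \<longlonglongrightarrow> e x * complex_of_real 1 * (a x * a x)"
        using gaussR_lim[of x] unfolding r_def by (intro tendsto_intros)
      then show "(\<lambda>n. e x * complex_of_real (gaussR (r n) x) * (a x * a x)) \<longlonglongrightarrow> e x * (a x * a x)" by simp
    qed
    show "AE x in lborel. norm (e x * complex_of_real (gaussR (r n) x) * (a x * a x)) \<le> (norm (a x))\<^sup>2" for n
      by (intro AE_I2) (auto simp: norm_mult ne power2_eq_square less_imp_le[OF gaussR_pos] gaussR_le1 intro!: mult_left_le_one_le)
  qed
  define I where "I n z = (\<integral>w. g w * complex_of_real (GamR (r n) (w - (\<xi> - z))) \<partial>lborel)" for n z
  have S_eq: "S n = (\<integral>z. g z * I n z \<partial>lborel)" for n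
  proof -
    have "S n = (\<integral>x. exp (\<i> * complex_of_real (x \<bullet> (- \<xi>))) * complex_of_real (gaussR (r n) x) *
            ((\<integral>z. exp (\<i> * complex_of_real (1 * (x \<bullet> z))) * g z \<partial>lborel) *
             (\<integral>w. exp (\<i> * complex_of_real (1 * (x \<bullet> w))) * g w \<partial>lborel)) \<partial>lborel)"
      unfolding S_def e_eq a_def by simp
    also have "\<dots> = (\<integral>z. \<integral>w. g z * g w * complex_of_real (GamR (r n) (- \<xi> + 1 *\<^sub>R z + 1 *\<^sub>R w)) \<partial>lborel \<partial>lborel)"
      by (rule triple[OF r gm gi gm gi])
    also have "\<dots> = (\<integral>z. g z * I n z \<partial>lborel)"
      unfolding I_def
    proof (rule Bochner_Integration.integral_cong[OF refl])
      fix z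
      have "(\<integral>w. g z * g w * complex_of_real (GamR (r n) (- \<xi> + 1 *\<^sub>R z + 1 *\<^sub>R w)) \<partial>lborel)
          = (\<integral>w. g z * (g w * complex_of_real (GamR (r n) (w - (\<xi> - z)))) \<partial>lborel)"
        by (rule Bochner_Integration.integral_cong[OF refl]) (simp add: algebra_simps)
      then show "(\<integral>w. g z * g w * complex_of_real (GamR (r n) (- \<xi> + 1 *\<^sub>R z + 1 *\<^sub>R w)) \<partial>lborel)
          = g z * (\<integral>w. g w * complex_of_real (GamR (r n) (w - (\<xi> - z))) \<partial>lborel)"
        by simp
    qed
    finally show ?thesis .
  qed
  have Im[measurable]: "I n \<in> borel_measurable lborel" for n
  proof -
    have "(\<lambda>z. \<integral>w. g w * complex_of_real (GamR (r n) (w - (\<xi> - z))) \<partial>lborel) \<in> borel_measurable lborel"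
      by (rule lborel.borel_measurable_lebesgue_integral) measurable
    then show ?thesis unfolding I_def[abs_def] .
  qed
  have I_bound: "norm (I n z) \<le> M * (4 * pi\<^sup>2)" for n z
  proof -
    have "norm (I n z) \<le> (\<integral>w. M * GamR (r n) (w - (\<xi> - z)) \<partial>lborel)"
      unfolding I_def
    proof (rule norm_integral_le)
      show "integrable lborel (\<lambda>w. M * GamR (r n) (w - (\<xi> - z)))"
        using integrable_GamR_shift[OF r, of n "\<xi> - z"] by simp
      fix w show "norm (g w * complex_of_real (GamR (r n) (w - (\<xi> - z)))) \<le> M * GamR (r n) (w - (\<xi> - z))"
        using GamR_pos[OF r, of n "w - (\<xi> - z)"] gb[of w]
        by (simp add: norm_mult abs_of_pos mult_right_mono)
    qed
    also have "\<dots> = M * (4 * pi\<^sup>2)" using integral_GamR_shift[OF r, of n "\<xi> - z"] by simp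
    finally show ?thesis .
  qed
  have T_lim: "(\<lambda>n. \<integral>z. g z * I n z \<partial>lborel) \<longlonglongrightarrow> (\<integral>z. g z * (complex_of_real (4 * pi\<^sup>2) * g (\<xi> - z)) \<partial>lborel)"
  proof (rule integral_dominated_convergence[where w="\<lambda>z. norm (g z) * (M * (4 * pi\<^sup>2))"])
    show "(\<lambda>z. g z * (complex_of_real (4 * pi\<^sup>2) * g (\<xi> - z))) \<in> borel_measurable lborel" by measurable
    show "(\<lambda>z. g z * I n z) \<in> borel_measurable lborel" for n by measurable
    show "integrable lborel (\<lambda>z. norm (g z) * (M * (4 * pi\<^sup>2)))" using gi by simp
    show "AE z in lborel. (\<lambda>n. g z * I n z) \<longlonglongrightarrow> g z * (complex_of_real (4 * pi\<^sup>2) * g (\<xi> - z))"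
      using cont
    proof eventually_elim
      case (elim z)
      have "(\<lambda>n. I n z) \<longlonglongrightarrow> complex_of_real (4 * pi\<^sup>2) * g (\<xi> - z)"
        unfolding I_def r_def by (rule approx_identity[OF gm gb elim])
      then show ?case by (intro tendsto_intros)
    qed
    show "AE z in lborel. norm (g z * I n z) \<le> norm (g z) * (M * (4 * pi\<^sup>2))" for n
      using I_bound by (intro AE_I2) (auto simp: norm_mult intro!: mult_left_mono)
  qed
  have lim_eq: "(\<integral>x. e x * (a x * a x) \<partial>lborel) = (\<integral>z. g z * (complex_of_real (4 * pi\<^sup>2) * g (\<xi> - z)) \<partial>lborel)"
    using LIMSEQ_unique[OF S_lim] T_lim unfolding S_eq by blast
  have pull: "(\<integral>z. g z * (complex_of_real (4 * pi\<^sup>2) * g (\<xi> - z)) \<partial>lborel)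
      = complex_of_real (4 * pi\<^sup>2) * (\<integral>z. g z * g (\<xi> - z) \<partial>lborel)"
  proof -
    have "(\<integral>z. g z * (complex_of_real (4 * pi\<^sup>2) * g (\<xi> - z)) \<partial>lborel)
      = (\<integral>z. complex_of_real (4 * pi\<^sup>2) * (g z * g (\<xi> - z)) \<partial>lborel)"
      by (rule Bochner_Integration.integral_cong[OF refl]) (simp only: mult.left_commute)
    then show ?thesis by (simp only: integral_mult_right_zero)
  qed
  have "FT (\<lambda>x. (iFT g x)\<^sup>2) \<xi> = c0 * c0 * complex_of_real (4 * pi\<^sup>2) * (\<integral>z. g z * g (\<xi> - z) \<partial>lborel)"
    unfolding FT_eq lim_eq pull by (simp only: mult.assoc)
  also have "c0 * c0 * complex_of_real (4 * pi\<^sup>2) = c0"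
    unfolding c0_def by (simp add: field_simps power2_eq_square)
  finally show ?thesis unfolding c0_def .
qed

end

lemma cos_lb: "1 - x\<^sup>2 / 2 \<le> cos (x::real)"
proof -
  have "cos x = 1 - 2 * (sin (x / 2))\<^sup>2" using cos_double_sin[of "x/2"] by simp
  moreover have "(sin (x / 2))\<^sup>2 \<le> (x / 2)\<^sup>2"
    using abs_sin_x_le_abs_x[of "x/2"] by (metis abs_ge_zero power2_abs power_mono)
  ultimately show ?thesis by (simp add: power2_eq_square)
qed

lemma fst_meas_raw:
  fixes g :: "'a \<Rightarrow> real \<times> real"
  shows "g \<in> borel_measurable M \<Longrightarrow> (\<lambda>x. fst (g x)) \<in> borel_measurable M"
  by (rule measurable_compose[OF _ borel_measurable_continuous_onI]) (auto intro: continuous_intros)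
lemma snd_meas_raw:
  fixes g :: "'a \<Rightarrow> real \<times> real"
  shows "g \<in> borel_measurable M \<Longrightarrow> (\<lambda>x. snd (g x)) \<in> borel_measurable M"
  by (rule measurable_compose[OF _ borel_measurable_continuous_onI]) (auto intro: continuous_intros)
lemma Wmult_meas[measurable (raw)]:
  assumes [measurable]: "f \<in> borel_measurable M" "g \<in> borel_measurable M"
  shows "(\<lambda>x. Wmult (f x) (g x)) \<in> borel_measurable M"
proof -
  have [measurable]: "(\<lambda>x. fst (g x)) \<in> borel_measurable M" "(\<lambda>x. snd (g x)) \<in> borel_measurable M"
    by (rule fst_meas_raw[OF assms(2)], rule snd_meas_raw[OF assms(2)])
  show ?thesis unfolding Wmult_def Psym_def by measurable
qed

lemma D1_closed: "closed (D1 N)" unfolding D1_def by (intro closed_Times closed_atLeastAtMost)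
lemma D2_closed: "closed (D2 N)" unfolding D2_def by (intro closed_Times closed_atLeastAtMost)
lemma D1_sets[measurable]: "D1 N \<in> sets borel" using D1_closed by simp
lemma D2_sets[measurable]: "D2 N \<in> sets borel" using D2_closed by simp


lemma phi_meas0: "phi_hat s N \<in> borel_measurable borel"
proof -
  have "(\<lambda>x. complex_of_real (N powr (-3/2 - s) * (indicator (D1 N) x + indicator (D2 N) x))) \<in> borel_measurable borel"
    by measurable
  then show ?thesis unfolding phi_hat_def[abs_def] .
qed

lemma phi_meas[measurable (raw)]:
  "f \<in> borel_measurable M \<Longrightarrow> (\<lambda>x. phi_hat s N (f x)) \<in> borel_measurable M"
  using measurable_compose[OF _ phi_meas0] by blast

lemma norm_Wmult: "norm (Wmult t v) \<le> 1"
  unfolding Wmult_def by (simp add: norm_exp)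

definition ph :: "real \<Rightarrow> real \<Rightarrow> R2 \<Rightarrow> real" where
  "ph s N z = N powr (-3/2 - s) * (indicator (D1 N) z + indicator (D2 N) z)"

lemma phi_real: "phi_hat s N z = complex_of_real (ph s N z)"
  unfolding phi_hat_def ph_def ..

lemma ph_nonneg: "0 \<le> ph s N z" unfolding ph_def by simp

lemma ph_le: "ph s N z \<le> 2 * N powr (-3/2 - s)"
proof -
  have "indicator (D1 N) z + indicator (D2 N) z \<le> (2::real)" by (simp add: indicator_def)
  then have "N powr (-3/2-s) * (indicator (D1 N) z + indicator (D2 N) z) \<le> N powr (-3/2-s) * 2"
    by (intro mult_left_mono) auto
  then show ?thesis by (simp add: ph_def mult.commute)
qed

lemma ph_zero: "z \<notin> D1 N \<Longrightarrow> z \<notin> D2 N \<Longrightarrow> ph s N z = 0"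
  unfolding ph_def by simp

lemma D1_bounded: "bounded (D1 N)"
  unfolding D1_def by (intro bounded_Times bounded_closed_interval)
lemma D2_bounded: "bounded (D2 N)"
  unfolding D2_def by (intro bounded_Times bounded_closed_interval)

lemma integrable_phi: "integrable lborel (phi_hat s N)"
proof -
  have i1: "integrable lborel (indicator (D1 N) :: R2 \<Rightarrow> real)"
    by (rule integrable_real_indicator) (use emeasure_bounded_finite[OF D1_bounded] in auto)
  have i2: "integrable lborel (indicator (D2 N) :: R2 \<Rightarrow> real)"
    by (rule integrable_real_indicator) (use emeasure_bounded_finite[OF D2_bounded] in auto)
  have "integrable lborel (\<lambda>z. complex_of_real (ph s N z))"
    unfolding ph_def using i1 i2 by (intro integrable_of_real integrable_mult_right Bochner_Integration.integrable_add)
  then show ?thesis unfolding phi_real[abs_def] .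
qed

lemma gfun_W: "gfun (\<lambda>v. Wmult t v * phi_hat s N v) (2 * N powr (-3/2 - s))"
proof
  show "(\<lambda>v. Wmult t v * phi_hat s N v) \<in> borel_measurable borel" by measurable
  show "integrable lborel (\<lambda>v. Wmult t v * phi_hat s N v)"
  proof (rule Bochner_Integration.integrable_bound[OF integrable_phi])
    show "(\<lambda>v. Wmult t v * phi_hat s N v) \<in> borel_measurable lborel" by measurable
    show "AE x in lborel. norm (Wmult t x * phi_hat s N x) \<le> norm (phi_hat s N x)"
      using norm_Wmult by (intro AE_I2) (auto simp: norm_mult intro!: mult_left_le_one_le)
  qed
  fix v
  have "norm (Wmult t v * phi_hat s N v) \<le> 1 * ph s N v"
    unfolding phi_real norm_mult using norm_Wmult[of t v] ph_nonneg[of s N v]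
    by (intro mult_mono) auto
  also have "\<dots> \<le> 2 * N powr (-3/2 - s)" using ph_le by simp
  finally show "norm (Wmult t v * phi_hat s N v) \<le> 2 * N powr (-3/2 - s)" .
qed

lemma isCont_loc_const:
  assumes "open S" "v \<in> S" "\<And>y. y \<in> S \<Longrightarrow> f y = f v"
  shows "isCont f v"
  unfolding isCont_def
proof (rule tendsto_eventually)
  show "\<forall>\<^sub>F x in at v. f x = f v"
    unfolding eventually_at_topological
    by (rule exI[of _ S]) (use assms in blast)
qed

lemma ind1_loc:
  fixes x a b :: real
  assumes "x \<noteq> a" "x \<noteq> b"
  shows "\<exists>S. open S \<and> x \<in> S \<and> (\<forall>y\<in>S. (y \<in> {a..b}) = (x \<in> {a..b}))"
proof (cases "x < a")
  case True
  then show ?thesis by (intro exI[of _ "{..<a}"]) auto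
next
  case False
  show ?thesis
  proof (cases "x > b")
    case True
    then show ?thesis by (intro exI[of _ "{b<..}"]) auto
  next
    case False
    with \<open>\<not> x < a\<close> assms have "a < x" "x < b" by auto
    then show ?thesis by (intro exI[of _ "{a<..<b}"]) auto
  qed
qed

lemma ind_box_cont:
  fixes v :: R2
  assumes "fst v \<noteq> a" "fst v \<noteq> b" "snd v \<noteq> c" "snd v \<noteq> d"
  shows "isCont (indicator ({a..b} \<times> {c..d}) :: R2 \<Rightarrow> real) v"
proof -
  obtain S1 where S1: "open S1" "fst v \<in> S1" "\<forall>y\<in>S1. (y \<in> {a..b}) = (fst v \<in> {a..b})"
    using ind1_loc[OF assms(1,2)] by blast
  obtain S2 where S2: "open S2" "snd v \<in> S2" "\<forall>y\<in>S2. (y \<in> {c..d}) = (snd v \<in> {c..d})"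
    using ind1_loc[OF assms(3,4)] by blast
  show ?thesis
  proof (rule isCont_loc_const[of "fst -` S1 \<inter> snd -` S2"])
    show "open (fst -` S1 \<inter> snd -` S2)" using S1(1) S2(1) by (intro open_Int open_vimage_fst open_vimage_snd)
    show "v \<in> fst -` S1 \<inter> snd -` S2" using S1(2) S2(2) by auto
    fix y assume "y \<in> fst -` S1 \<inter> snd -` S2"
    then show "indicator ({a..b} \<times> {c..d}) y = (indicator ({a..b} \<times> {c..d}) v :: real)"
      using S1(3) S2(3) by (auto simp: indicator_def mem_Times_iff)
  qed
qed

definition badx :: "real \<Rightarrow> real set" where
  "badx N = {0, N/2, N, 2*N}"
definition bady :: "real \<Rightarrow> real set" where
  "bady N = {-6 * N\<^sup>2, 6 * N\<^sup>2, sqrt 3 * N\<^sup>2, (sqrt 3 + 1) * N\<^sup>2}"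

lemma g_cont:
  assumes "fst v \<notin> badx N" "snd v \<notin> bady N"
  shows "isCont (\<lambda>v. Wmult t v * phi_hat s N v) v"
proof -
  have c1: "isCont (indicator (D1 N) :: R2 \<Rightarrow> real) v"
    unfolding D1_def by (rule ind_box_cont) (use assms in \<open>auto simp: badx_def bady_def\<close>)
  have c2: "isCont (indicator (D2 N) :: R2 \<Rightarrow> real) v"
    unfolding D2_def by (rule ind_box_cont) (use assms in \<open>auto simp: badx_def bady_def\<close>)
  have cp: "isCont (phi_hat s N) v"
    unfolding phi_hat_def[abs_def] using c1 c2 by (intro continuous_intros)
  have f0: "fst v \<noteq> 0" using assms by (auto simp: badx_def)
  have cw: "isCont (Wmult t) v"
    unfolding Wmult_def[abs_def] Psym_def using f0 by (intro continuous_intros) auto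
  show ?thesis using cw cp by (intro continuous_intros)
qed

lemma null_fst:
  fixes F :: "real set"
  assumes "finite F"
  shows "{z::R2. fst z \<in> F} \<in> null_sets lborel"
proof -
  have eq: "{z::R2. fst z \<in> F} = F \<times> UNIV" by auto
  have F: "F \<in> sets lborel" using assms by (simp add: finite_imp_closed)
  have "emeasure (lborel \<Otimes>\<^sub>M lborel) (F \<times> (UNIV :: real set)) = emeasure lborel F * emeasure lborel (UNIV :: real set)"
    using F by (intro lborel.emeasure_pair_measure_Times) auto
  also have "emeasure lborel F = 0" using assms by (simp add: emeasure_lborel_countable countable_finite)
  finally have "emeasure lborel (F \<times> (UNIV :: real set)) = 0" by (simp add: lborel_prod)
  moreover have "F \<times> (UNIV :: real set) \<in> sets lborel"
    using assms by (simp add: finite_imp_closed closed_Times)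
  ultimately show ?thesis unfolding eq by auto
qed

lemma null_snd:
  fixes F :: "real set"
  assumes "finite F"
  shows "{z::R2. snd z \<in> F} \<in> null_sets lborel"
proof -
  have eq: "{z::R2. snd z \<in> F} = UNIV \<times> F" by auto
  have F: "F \<in> sets lborel" using assms by (simp add: finite_imp_closed)
  have "emeasure (lborel \<Otimes>\<^sub>M lborel) ((UNIV :: real set) \<times> F) = emeasure lborel (UNIV :: real set) * emeasure lborel F"
    using F by (intro lborel.emeasure_pair_measure_Times) auto
  also have "emeasure lborel F = 0" using assms by (simp add: emeasure_lborel_countable countable_finite)
  finally have "emeasure lborel ((UNIV :: real set) \<times> F) = 0" by (simp add: lborel_prod)
  moreover have "(UNIV :: real set) \<times> F \<in> sets lborel"
    using assms by (simp add: finite_imp_closed closed_Times)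
  ultimately show ?thesis unfolding eq by auto
qed

lemma AE_g_cont: "AE z in lborel. isCont (\<lambda>v. Wmult t v * phi_hat s N v) (\<xi> - z)"
proof -
  have fin1: "finite ((\<lambda>c. fst \<xi> - c) ` badx N)" by (simp add: badx_def)
  have fin2: "finite ((\<lambda>c. snd \<xi> - c) ` bady N)" by (simp add: bady_def)
  have a1: "AE (z::R2) in lborel. fst z \<notin> (\<lambda>c. fst \<xi> - c) ` badx N"
    by (rule AE_I'[OF null_fst[OF fin1]]) auto
  have a2: "AE (z::R2) in lborel. snd z \<notin> (\<lambda>c. snd \<xi> - c) ` bady N"
    by (rule AE_I'[OF null_snd[OF fin2]]) auto
  from a1 a2 show ?thesis
  proof eventually_elim
    case (elim z)
    have "fst (\<xi> - z) \<notin> badx N"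
    proof
      assume "fst (\<xi> - z) \<in> badx N"
      then have "fst z \<in> (\<lambda>c. fst \<xi> - c) ` badx N" by (intro image_eqI[of _ _ "fst (\<xi> - z)"]) auto
      then show False using elim by simp
    qed
    moreover have "snd (\<xi> - z) \<notin> bady N"
    proof
      assume "snd (\<xi> - z) \<in> bady N"
      then have "snd z \<in> (\<lambda>c. snd \<xi> - c) ` bady N" by (intro image_eqI[of _ _ "snd (\<xi> - z)"]) auto
      then show False using elim by simp
    qed
    ultimately show ?case by (rule g_cont)
  qed
qed

lemma FT_W:
  "FT (\<lambda>x. (W t (phi_hat s N) x)\<^sup>2) \<xi> = complex_of_real (1 / (4 * pi\<^sup>2)) *
     (\<integral>z. (Wmult t z * phi_hat s N z) * (Wmult t (\<xi> - z) * phi_hat s N (\<xi> - z)) \<partial>lborel)"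
proof -
  interpret gfun "\<lambda>v. Wmult t v * phi_hat s N v" "2 * N powr (-3/2 - s)" by (rule gfun_W)
  have "W t (phi_hat s N) = iFT (\<lambda>v. Wmult t v * phi_hat s N v)" unfolding W_def ..
  then show ?thesis using FT_sq[OF AE_g_cont] by simp
qed

definition Gf :: "real \<Rightarrow> real \<Rightarrow> real \<Rightarrow> R2 \<Rightarrow> complex" where
  "Gf s N t' z = Wmult t' z * phi_hat s N z"

definition Kf :: "real \<Rightarrow> real \<Rightarrow> real \<Rightarrow> R2 \<Rightarrow> complex" where
  "Kf s N t' \<xi> = (\<integral>z. Gf s N t' z * Gf s N t' (\<xi> - z) \<partial>lborel)"

definition Jf :: "real \<Rightarrow> real \<Rightarrow> real \<Rightarrow> R2 \<Rightarrow> complex" where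
  "Jf s N t \<xi> = set_lebesgue_integral lborel {0..t} (\<lambda>t'. Wmult (t - t') \<xi> * Kf s N t' \<xi>)"

lemma u2_eq:
  "u2_hat (phi_hat s N) t \<xi> = - (\<i> * complex_of_real (fst \<xi>) * complex_of_real (1 / (4 * pi\<^sup>2))) * Jf s N t \<xi>"
proof -
  have "(\<lambda>t'. Wmult (t - t') \<xi> * (\<i> * complex_of_real (fst \<xi>)) * FT (\<lambda>x. (W t' (phi_hat s N) x)\<^sup>2) \<xi>)
      = (\<lambda>t'. (\<i> * complex_of_real (fst \<xi>) * complex_of_real (1 / (4 * pi\<^sup>2))) * (Wmult (t - t') \<xi> * Kf s N t' \<xi>))"
    unfolding FT_W Kf_def Gf_def by (simp add: fun_eq_iff mult_ac)
  then show ?thesis unfolding u2_hat_def Jf_def by simp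
qed

lemma sqrt3_le2: "sqrt 3 \<le> (2::real)"
proof -
  have "sqrt 3 \<le> sqrt (4::real)" by (rule real_sqrt_le_mono) simp
  then show ?thesis by simp
qed

lemma sqrt3_nonneg: "0 \<le> sqrt (3::real)" by simp

lemma D_bounds:
  assumes N: "N \<ge> 0" and z: "z \<in> D1 N \<or> z \<in> D2 N"
  shows "N/2 \<le> fst z \<and> fst z \<le> 2 * N \<and> - 6 * N\<^sup>2 \<le> snd z \<and> snd z \<le> 6 * N\<^sup>2"
proof -
  have n2: "0 \<le> N\<^sup>2" by simp
  have a: "sqrt 3 * N\<^sup>2 \<ge> - 6 * N\<^sup>2" using mult_right_mono[OF sqrt3_nonneg n2] n2 by linarith
  have b: "(sqrt 3 + 1) * N\<^sup>2 \<le> 6 * N\<^sup>2" using sqrt3_le2 n2 by (intro mult_right_mono) auto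
  show ?thesis using z N a b by (auto simp: D1_def D2_def mem_Times_iff)
qed

lemma ph_nonzero_D: "ph s N z \<noteq> 0 \<Longrightarrow> z \<in> D1 N \<or> z \<in> D2 N"
  using ph_zero by blast

lemma integrable_ph: "integrable lborel (ph s N)"
proof -
  have i1: "integrable lborel (indicator (D1 N) :: R2 \<Rightarrow> real)"
    by (rule integrable_real_indicator) (use emeasure_bounded_finite[OF D1_bounded] in auto)
  have i2: "integrable lborel (indicator (D2 N) :: R2 \<Rightarrow> real)"
    by (rule integrable_real_indicator) (use emeasure_bounded_finite[OF D2_bounded] in auto)
  have "integrable lborel (\<lambda>z. N powr (-3/2 - s) * (indicator (D1 N) z + indicator (D2 N) z))"
    using i1 i2 by (intro integrable_mult_right Bochner_Integration.integrable_add)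
  then show ?thesis unfolding ph_def[abs_def] .
qed

lemma ph_meas[measurable]: "ph s N \<in> borel_measurable borel"
  unfolding ph_def[abs_def] by measurable

lemma norm_Gf: "norm (Gf s N t' z) \<le> ph s N z"
  unfolding Gf_def phi_real norm_mult using norm_Wmult[of t' z] ph_nonneg[of s N z]
  by (simp add: mult_left_le_one_le)

lemma Gf_eq: "Gf s N t' z = Wmult t' z * complex_of_real (ph s N z)"
  unfolding Gf_def phi_real ..

lemma Kf_meas: "(\<lambda>t'. Kf s N t' \<xi>) \<in> borel_measurable lborel"
proof -
  have "(\<lambda>t'. \<integral>z. Wmult t' z * phi_hat s N z * (Wmult t' (\<xi> - z) * phi_hat s N (\<xi> - z)) \<partial>lborel) \<in> borel_measurable lborel"
    by (rule lborel.borel_measurable_lebesgue_integral) measurable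
  then show ?thesis unfolding Kf_def Gf_def .
qed

definition PI :: "real \<Rightarrow> real \<Rightarrow> real" where "PI s N = (\<integral>z. ph s N z \<partial>lborel)"

lemma Kf_bound: "norm (Kf s N t' \<xi>) \<le> 2 * N powr (-3/2 - s) * PI s N"
proof -
  have "norm (Kf s N t' \<xi>) \<le> (\<integral>z. ph s N z * (2 * N powr (-3/2 - s)) \<partial>lborel)"
    unfolding Kf_def
  proof (rule norm_integral_le)
    show "integrable lborel (\<lambda>z. ph s N z * (2 * N powr (-3/2 - s)))"
      using integrable_ph by simp
    fix z
    have "norm (Gf s N t' z * Gf s N t' (\<xi> - z)) \<le> ph s N z * ph s N (\<xi> - z)"
      unfolding norm_mult by (intro mult_mono norm_Gf) (auto simp: ph_nonneg)
    also have "\<dots> \<le> ph s N z * (2 * N powr (-3/2 - s))"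
      by (intro mult_left_mono ph_le ph_nonneg)
    finally show "norm (Gf s N t' z * Gf s N t' (\<xi> - z)) \<le> ph s N z * (2 * N powr (-3/2 - s))" .
  qed
  also have "\<dots> = 2 * N powr (-3/2 - s) * PI s N" unfolding PI_def by simp
  finally show ?thesis .
qed

definition Box :: "real \<Rightarrow> R2 set" where
  "Box N = {N..4*N} \<times> {-12 * N\<^sup>2..12 * N\<^sup>2}"

lemma Kf_zero:
  assumes N: "N \<ge> 0" and \<xi>: "\<xi> \<notin> Box N"
  shows "Kf s N t' \<xi> = 0"
proof -
  have "Gf s N t' z * Gf s N t' (\<xi> - z) = 0" for z
  proof (rule ccontr)
    assume "Gf s N t' z * Gf s N t' (\<xi> - z) \<noteq> 0"
    then have "ph s N z \<noteq> 0" "ph s N (\<xi> - z) \<noteq> 0" unfolding Gf_eq by auto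
    then have "z \<in> D1 N \<or> z \<in> D2 N" "\<xi> - z \<in> D1 N \<or> \<xi> - z \<in> D2 N" by (auto dest: ph_nonzero_D)
    from D_bounds[OF N this(1)] D_bounds[OF N this(2)] have "\<xi> \<in> Box N"
      unfolding Box_def by (cases \<xi>, cases z) (auto simp: mem_Times_iff)
    with \<xi> show False by simp
  qed
  then have "(\<lambda>z. Gf s N t' z * Gf s N t' (\<xi> - z)) = (\<lambda>z. 0)" by (intro ext)
  then show ?thesis unfolding Kf_def by simp
qed

lemma Jf_integrable:
  assumes t: "t \<ge> 0"
  shows "set_integrable lborel {0..t} (\<lambda>t'. Wmult (t - t') \<xi> * Kf s N t' \<xi>)"
  unfolding set_integrable_def
proof (rule Bochner_Integration.integrable_bound)
  show "integrable lborel (\<lambda>t'. indicator {0..t} t' * (2 * N powr (-3/2 - s) * PI s N))"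
    by (intro integrable_mult_left integrable_real_indicator) (auto simp: emeasure_lborel_Icc_eq)
  have [measurable]: "(\<lambda>t'. Kf s N t' \<xi>) \<in> borel_measurable lborel" by (rule Kf_meas)
  show "(\<lambda>t'. indicator {0..t} t' *\<^sub>R (Wmult (t - t') \<xi> * Kf s N t' \<xi>)) \<in> borel_measurable lborel"
    by measurable
  show "AE x in lborel. norm (indicator {0..t} x *\<^sub>R (Wmult (t - x) \<xi> * Kf s N x \<xi>)) \<le> norm (indicator {0..t} x * (2 * N powr (-3/2 - s) * PI s N))"
  proof (intro AE_I2)
    fix x
    have "norm (Wmult (t - x) \<xi> * Kf s N x \<xi>) \<le> 1 * (2 * N powr (-3/2 - s) * PI s N)"
      unfolding norm_mult by (intro mult_mono norm_Wmult Kf_bound) auto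
    moreover have "0 \<le> 2 * N powr (-3/2 - s) * PI s N" using Kf_bound[of s N x \<xi>] norm_ge_zero order_trans by blast
    ultimately show "norm (indicator {0..t} x *\<^sub>R (Wmult (t - x) \<xi> * Kf s N x \<xi>)) \<le> norm (indicator {0..t} x * (2 * N powr (-3/2 - s) * PI s N))"
      by (auto simp: indicator_def)
  qed
qed

lemma Jf_bound:
  assumes t: "t \<ge> 0"
  shows "norm (Jf s N t \<xi>) \<le> t * (2 * N powr (-3/2 - s) * PI s N)"
proof -
  have nn: "0 \<le> 2 * N powr (-3/2 - s) * PI s N" using Kf_bound[of s N 0 \<xi>] norm_ge_zero order_trans by blast
  have "norm (Jf s N t \<xi>) \<le> (\<integral>t'. indicator {0..t} t' * (2 * N powr (-3/2 - s) * PI s N) \<partial>lborel)"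
    unfolding Jf_def set_lebesgue_integral_def
  proof (rule norm_integral_le)
    show "integrable lborel (\<lambda>t'. indicator {0..t} t' * (2 * N powr (-3/2 - s) * PI s N))"
      by (intro integrable_mult_left integrable_real_indicator) (auto simp: emeasure_lborel_Icc_eq)
    fix x
    have "norm (Wmult (t - x) \<xi> * Kf s N x \<xi>) \<le> 1 * (2 * N powr (-3/2 - s) * PI s N)"
      unfolding norm_mult by (intro mult_mono norm_Wmult Kf_bound) auto
    then show "norm (indicator {0..t} x *\<^sub>R (Wmult (t - x) \<xi> * Kf s N x \<xi>)) \<le> indicator {0..t} x * (2 * N powr (-3/2 - s) * PI s N)"
      by (auto simp: indicator_def)
  qed
  also have "\<dots> = t * (2 * N powr (-3/2 - s) * PI s N)" using t by simp
  finally show ?thesis .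
qed

lemma Jf_zero: "N \<ge> 0 \<Longrightarrow> \<xi> \<notin> Box N \<Longrightarrow> Jf s N t \<xi> = 0"
  unfolding Jf_def by (simp add: Kf_zero)

definition Om :: "real \<Rightarrow> R2 \<Rightarrow> bool" where
  "Om N v \<longleftrightarrow> N/2 \<le> fst v \<and> fst v \<le> 2 * N \<and> \<bar>snd v\<bar> \<le> 6 * N\<^sup>2"

lemma Om_D: "N \<ge> 0 \<Longrightarrow> z \<in> D1 N \<or> z \<in> D2 N \<Longrightarrow> Om N z"
  using D_bounds[of N z] by (auto simp: Om_def)

lemma Psym_bound:
  assumes N: "N > 0" and v: "Om N v"
  shows "\<bar>Psym v\<bar> \<le> 80 * N ^ 3"
proof -
  have f0: "N/2 \<le> fst v" "fst v \<le> 2 * N" "\<bar>snd v\<bar> \<le> 6 * N\<^sup>2" using v by (auto simp: Om_def)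
  have fpos: "fst v > 0" using f0 N by linarith
  have a: "\<bar>fst v ^ 3\<bar> \<le> 8 * N ^ 3"
  proof -
    have "\<bar>fst v ^ 3\<bar> = fst v ^ 3" using fpos by simp
    also have "\<dots> \<le> (2 * N) ^ 3" using fpos f0 by (intro power_mono) auto
    finally show ?thesis by simp
  qed
  have s2: "(snd v)\<^sup>2 \<le> (6 * N\<^sup>2)\<^sup>2"
    using f0(3) by (metis abs_ge_zero power2_abs power_mono)
  have b: "(snd v)\<^sup>2 / fst v \<le> 72 * N ^ 3"
  proof -
    have "(snd v)\<^sup>2 / fst v \<le> (6 * N\<^sup>2)\<^sup>2 / (N/2)"
      using s2 f0 fpos N by (intro frac_le) auto
    also have "\<dots> = 72 * N ^ 3" using N by (simp add: power2_eq_square power3_eq_cube field_simps)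
    finally show ?thesis .
  qed
  have b0: "0 \<le> (snd v)\<^sup>2 / fst v" using fpos by simp
  show ?thesis unfolding Psym_def using a b b0 by linarith
qed

lemma fst_sq_bound: "N \<ge> 0 \<Longrightarrow> Om N v \<Longrightarrow> (fst v)\<^sup>2 \<le> 4 * N\<^sup>2"
proof -
  assume N: "N \<ge> 0" and v: "Om N v"
  then have "0 \<le> fst v" "fst v \<le> 2 * N" by (auto simp: Om_def)
  then have "(fst v)\<^sup>2 \<le> (2 * N)\<^sup>2" by (intro power_mono) auto
  then show ?thesis by (simp add: power2_eq_square)
qed

lemma Re_E:
  assumes N: "N > 0" and O: "Om N \<xi>" "Om N z" "Om N w" and t': "0 \<le> t'" "t' \<le> t"
    and c1: "160 * t * N ^ 3 \<le> 1/2" and c2: "8 * N\<^sup>2 * t \<le> 1/4"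
  shows "Re (Wmult (t - t') \<xi> * Wmult t' z * Wmult t' w) \<ge> 1/2"
proof -
  define \<theta> where "\<theta> = (t - t') * Psym \<xi> + t' * Psym z + t' * Psym w"
  define d where "d = (fst \<xi>)\<^sup>2 * (t - t') + (fst z)\<^sup>2 * t' + (fst w)\<^sup>2 * t'"
  have eq: "Wmult (t - t') \<xi> * Wmult t' z * Wmult t' w = exp (\<i> * complex_of_real \<theta> - complex_of_real d)"
    unfolding Wmult_def \<theta>_def d_def exp_add[symmetric] using t'
    by (intro arg_cong[where f=exp]) (simp add: algebra_simps)
  have re: "Re (Wmult (t - t') \<xi> * Wmult t' z * Wmult t' w) = exp (- d) * cos \<theta>"
    unfolding eq Re_exp by simp
  have P: "\<bar>Psym \<xi>\<bar> \<le> 80 * N ^ 3" "\<bar>Psym z\<bar> \<le> 80 * N ^ 3" "\<bar>Psym w\<bar> \<le> 80 * N ^ 3"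
    using Psym_bound[OF N] O by auto
  have "\<bar>\<theta>\<bar> \<le> (t - t') * (80 * N ^ 3) + t' * (80 * N ^ 3) + t' * (80 * N ^ 3)"
    unfolding \<theta>_def using t' P
    by (intro order_trans[OF abs_triangle_ineq] add_mono order_trans[OF abs_triangle_ineq])
       (auto simp: abs_mult intro!: mult_mono)
  also have "\<dots> \<le> 160 * t * N ^ 3" using t' N by (simp add: algebra_simps)
  finally have th: "\<bar>\<theta>\<bar> \<le> 1/2" using c1 by linarith
  have F: "(fst \<xi>)\<^sup>2 \<le> 4 * N\<^sup>2" "(fst z)\<^sup>2 \<le> 4 * N\<^sup>2" "(fst w)\<^sup>2 \<le> 4 * N\<^sup>2"
    using fst_sq_bound[of N] N O by auto
  have "d \<le> 4 * N\<^sup>2 * (t - t') + 4 * N\<^sup>2 * t' + 4 * N\<^sup>2 * t'"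
    unfolding d_def using t' F by (intro add_mono mult_right_mono) auto
  also have "\<dots> \<le> 8 * N\<^sup>2 * t" using t' mult_right_mono[OF t'(2), of "N\<^sup>2"] by (simp add: algebra_simps)
  finally have dd: "d \<le> 1/4" using c2 by linarith
  have e: "exp (- d) \<ge> 3/4" using exp_ge_add_one_self[of "- d"] dd by linarith
  have "\<theta>\<^sup>2 \<le> (1/2)\<^sup>2" using th by (metis abs_ge_zero power2_abs power_mono)
  then have c: "cos \<theta> \<ge> 7/8" using cos_lb[of \<theta>] by (simp add: power2_eq_square)
  have "exp (- d) * cos \<theta> \<ge> 3/4 * (7/8)" using e c by (intro mult_mono) auto
  then show ?thesis unfolding re by simp
qed

definition Rg :: "real \<Rightarrow> R2 set" where
  "Rg N = {7 * N / 4..2 * N} \<times> {2 * N\<^sup>2..3 * N\<^sup>2}"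

lemma Rg_Om: "N \<ge> 0 \<Longrightarrow> \<xi> \<in> Rg N \<Longrightarrow> Om N \<xi>"
  by (auto simp: Rg_def Om_def mem_Times_iff)

definition Qs :: "real \<Rightarrow> R2 \<Rightarrow> R2 set" where
  "Qs N \<xi> = {N/2..3 * N / 4} \<times> {snd \<xi> - (sqrt 3 + 1) * N\<^sup>2..snd \<xi> - sqrt 3 * N\<^sup>2}"

lemma Q_D:
  assumes N: "N \<ge> 0" and \<xi>: "\<xi> \<in> Rg N" and z: "z \<in> Qs N \<xi>"
  shows "z \<in> D1 N" "\<xi> - z \<in> D2 N"
proof -
  have n2: "0 \<le> N\<^sup>2" by simp
  have s1: "(sqrt 3 + 1) * N\<^sup>2 \<le> 3 * N\<^sup>2" using sqrt3_le2 n2 by (intro mult_right_mono) auto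
  have s0: "0 \<le> sqrt 3 * N\<^sup>2" by simp
  have zz: "snd \<xi> - (sqrt 3 + 1) * N\<^sup>2 \<le> snd z" "snd z \<le> snd \<xi> - sqrt 3 * N\<^sup>2" "N/2 \<le> fst z" "fst z \<le> 3 * N / 4"
    using z by (auto simp: Qs_def mem_Times_iff)
  have xx: "2 * N\<^sup>2 \<le> snd \<xi>" "snd \<xi> \<le> 3 * N\<^sup>2" using \<xi> by (auto simp: Rg_def mem_Times_iff)
  have "snd z \<le> 6 * N\<^sup>2" "- 6 * N\<^sup>2 \<le> snd z" "fst z \<le> N" using zz xx s0 s1 n2 N by linarith+
  then show "z \<in> D1 N" using zz by (auto simp: D1_def mem_Times_iff)
  show "\<xi> - z \<in> D2 N" using N \<xi> z by (auto simp: Rg_def Qs_def D2_def mem_Times_iff)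
qed

lemma ph_ge: "z \<in> D1 N \<or> z \<in> D2 N \<Longrightarrow> ph s N z \<ge> N powr (-3/2 - s)"
proof -
  assume z: "z \<in> D1 N \<or> z \<in> D2 N"
  have "1 \<le> indicator (D1 N) z + (indicator (D2 N) z :: real)" using z by (auto simp: indicator_def)
  then have "N powr (-3/2 - s) * 1 \<le> N powr (-3/2 - s) * (indicator (D1 N) z + indicator (D2 N) z)"
    by (intro mult_left_mono) auto
  then show ?thesis by (simp add: ph_def)
qed

lemma Qs_sets[measurable]: "Qs N \<xi> \<in> sets borel"
  unfolding Qs_def by (intro borel_closed closed_Times closed_atLeastAtMost)

lemma emeasure_Qs: "N \<ge> 0 \<Longrightarrow> emeasure lborel (Qs N \<xi>) = ennreal (N / 4 * N\<^sup>2)"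
proof -
  assume N: "N \<ge> 0"
  have "emeasure (lborel \<Otimes>\<^sub>M lborel) (Qs N \<xi>) = emeasure lborel {N/2..3 * N / 4} * emeasure lborel {snd \<xi> - (sqrt 3 + 1) * N\<^sup>2..snd \<xi> - sqrt 3 * N\<^sup>2}"
    unfolding Qs_def by (intro lborel.emeasure_pair_measure_Times) auto
  also have "\<dots> = ennreal (N / 4) * ennreal (N\<^sup>2)"
    using N by (simp add: algebra_simps)
  also have "\<dots> = ennreal (N / 4 * N\<^sup>2)" using N by (intro ennreal_mult[symmetric]) auto
  finally show ?thesis by (simp add: lborel_prod)
qed

lemma measure_Qs: "N \<ge> 0 \<Longrightarrow> measure lborel (Qs N \<xi>) = N / 4 * N\<^sup>2"
  using emeasure_Qs[of N \<xi>] by (simp add: measure_def)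

lemma Re_inner_lb:
  assumes N: "N > 0" and \<xi>: "\<xi> \<in> Rg N" and t': "0 \<le> t'" "t' \<le> t"
    and c1: "160 * t * N ^ 3 \<le> 1/2" and c2: "8 * N\<^sup>2 * t \<le> 1/4"
  shows "Re (Wmult (t - t') \<xi> * Kf s N t' \<xi>) \<ge> N powr (-3 - 2 * s) * (N / 4 * N\<^sup>2) / 2"
proof -
  define F where "F z = Wmult (t - t') \<xi> * (Gf s N t' z * Gf s N t' (\<xi> - z))" for z
  define E where "E z = Wmult (t - t') \<xi> * Wmult t' z * Wmult t' (\<xi> - z)" for z
  have FE: "F z = E z * complex_of_real (ph s N z * ph s N (\<xi> - z))" for z
    unfolding F_def E_def Gf_eq by (simp add: mult_ac)
  have Fm[measurable]: "F \<in> borel_measurable lborel" unfolding F_def Gf_def by measurable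
  have Fi: "integrable lborel F"
  proof (rule Bochner_Integration.integrable_bound)
    show "integrable lborel (\<lambda>z. ph s N z * (2 * N powr (-3/2 - s)))" using integrable_ph by simp
    show "F \<in> borel_measurable lborel" by measurable
    show "AE z in lborel. norm (F z) \<le> norm (ph s N z * (2 * N powr (-3/2 - s)))"
    proof (intro AE_I2)
      fix z
      have "norm (F z) \<le> 1 * (ph s N z * ph s N (\<xi> - z))"
        unfolding F_def norm_mult using norm_Wmult[of "t - t'" \<xi>] norm_Gf[of s N t'] ph_nonneg[of s N]
        by (intro mult_mono) (auto intro!: mult_mono)
      also have "\<dots> \<le> ph s N z * (2 * N powr (-3/2 - s))"
        using mult_left_mono[OF ph_le[of s N "\<xi> - z"] ph_nonneg[of s N z]] by simp
      finally show "norm (F z) \<le> norm (ph s N z * (2 * N powr (-3/2 - s)))"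
        using ph_nonneg[of s N z] by simp
    qed
  qed
  have eqK: "Wmult (t - t') \<xi> * Kf s N t' \<xi> = integral\<^sup>L lborel F"
    unfolding Kf_def F_def by simp
  have ReI: "Re (integral\<^sup>L lborel F) = (\<integral>z. Re (F z) \<partial>lborel)"
    using integral_bounded_linear[OF bounded_linear_Re Fi] by simp
  have N0: "N \<ge> 0" using N by simp
  have OmX: "Om N \<xi>" using Rg_Om[OF N0 \<xi>] .
  have pw: "Re (F z) \<ge> indicator (Qs N \<xi>) z * (N powr (-3 - 2 * s) / 2)" for z
  proof (cases "ph s N z * ph s N (\<xi> - z) = 0")
    case True
    have "z \<notin> Qs N \<xi>"
    proof
      assume zQ: "z \<in> Qs N \<xi>"
      have p0: "0 < N powr (-3/2 - s)" using N by simp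
      have "N powr (-3/2 - s) \<le> ph s N z" using Q_D(1)[OF N0 \<xi> zQ] by (intro ph_ge) simp
      moreover have "N powr (-3/2 - s) \<le> ph s N (\<xi> - z)" using Q_D(2)[OF N0 \<xi> zQ] by (intro ph_ge) simp
      ultimately have "0 < ph s N z * ph s N (\<xi> - z)" using p0 by (intro mult_pos_pos) linarith+
      then show False using True by simp
    qed
    moreover have "Re (F z) = 0" unfolding FE using True by simp
    ultimately show ?thesis by simp
  next
    case False
    then have "ph s N z \<noteq> 0" "ph s N (\<xi> - z) \<noteq> 0" by auto
    then have Oz: "Om N z" "Om N (\<xi> - z)" using Om_D[OF N0] ph_nonzero_D by blast+
    have RE: "Re (E z) \<ge> 1/2" unfolding E_def by (rule Re_E[OF N OmX Oz t' c1 c2])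
    have ReF: "Re (F z) = Re (E z) * (ph s N z * ph s N (\<xi> - z))" by (simp add: FE)
    have pp: "0 \<le> ph s N z * ph s N (\<xi> - z)" by (simp add: ph_nonneg)
    show ?thesis
    proof (cases "z \<in> Qs N \<xi>")
      case True
      have "N powr (-3/2 - s) * N powr (-3/2 - s) \<le> ph s N z * ph s N (\<xi> - z)"
        using Q_D[OF N0 \<xi> True] ph_ge[of z N s] ph_ge[of "\<xi> - z" N s]
        by (intro mult_mono) (auto simp: ph_nonneg)
      moreover have "N powr (-3/2 - s) * N powr (-3/2 - s) = N powr (-3 - 2 * s)"
        by (simp add: powr_add[symmetric])
      ultimately have "N powr (-3 - 2 * s) \<le> ph s N z * ph s N (\<xi> - z)" by simp
      then have "1/2 * N powr (-3 - 2 * s) \<le> Re (E z) * (ph s N z * ph s N (\<xi> - z))"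
        using RE by (intro mult_mono) auto
      then show ?thesis using True ReF by simp
    next
      case False
      have "0 \<le> Re (E z) * (ph s N z * ph s N (\<xi> - z))" using RE pp by simp
      then show ?thesis using False ReF by simp
    qed
  qed
  have "(\<integral>z. indicator (Qs N \<xi>) z * (N powr (-3 - 2 * s) / 2) \<partial>lborel) \<le> (\<integral>z. Re (F z) \<partial>lborel)"
  proof (rule integral_mono)
    show "integrable lborel (\<lambda>z. indicator (Qs N \<xi>) z * (N powr (-3 - 2 * s) / 2))"
      by (intro integrable_mult_left integrable_real_indicator) (auto simp: emeasure_Qs[OF N0])
    show "integrable lborel (\<lambda>z. Re (F z))" using Fi by simp
  qed (rule pw)
  moreover have "(\<integral>z. indicator (Qs N \<xi>) z * (N powr (-3 - 2 * s) / 2) \<partial>lborel) = measure lborel (Qs N \<xi>) * (N powr (-3 - 2 * s) / 2)"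
    by simp
  ultimately have "measure lborel (Qs N \<xi>) * (N powr (-3 - 2 * s) / 2) \<le> (\<integral>z. Re (F z) \<partial>lborel)" by simp
  then have "N / 4 * N\<^sup>2 * (N powr (-3 - 2 * s) / 2) \<le> (\<integral>z. Re (F z) \<partial>lborel)" unfolding measure_Qs[OF N0] .
  moreover have "N powr (-3 - 2 * s) * (N / 4 * N\<^sup>2) / 2 = N / 4 * N\<^sup>2 * (N powr (-3 - 2 * s) / 2)" by simp
  ultimately show ?thesis unfolding eqK ReI by linarith
qed

lemma Jf_lb:
  assumes N: "N > 0" and \<xi>: "\<xi> \<in> Rg N" and t: "0 \<le> t"
    and c1: "160 * t * N ^ 3 \<le> 1/2" and c2: "8 * N\<^sup>2 * t \<le> 1/4"
  shows "norm (Jf s N t \<xi>) \<ge> t * (N powr (-3 - 2 * s) * (N / 4 * N\<^sup>2) / 2)"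
proof -
  define c where "c = N powr (-3 - 2 * s) * (N / 4 * N\<^sup>2) / 2"
  define f where "f t' = indicator {0..t} t' *\<^sub>R (Wmult (t - t') \<xi> * Kf s N t' \<xi>)" for t'
  have fi: "integrable lborel f" using Jf_integrable[OF t, of \<xi> s N] unfolding set_integrable_def f_def .
  have "Re (Jf s N t \<xi>) = (\<integral>t'. Re (f t') \<partial>lborel)"
    unfolding Jf_def set_lebesgue_integral_def f_def[symmetric]
    using integral_bounded_linear[OF bounded_linear_Re fi] by simp
  also have "\<dots> \<ge> (\<integral>t'. indicator {0..t} t' * c \<partial>lborel)"
  proof (rule integral_mono)
    show "integrable lborel (\<lambda>t'. indicator {0..t} t' * c)"
      by (intro integrable_mult_left integrable_real_indicator) (auto simp: emeasure_lborel_Icc_eq)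
    show "integrable lborel (\<lambda>t'. Re (f t'))" using fi by simp
    fix t'
    show "indicator {0..t} t' * c \<le> Re (f t')"
    proof (cases "t' \<in> {0..t}")
      case True
      then show ?thesis unfolding f_def c_def using Re_inner_lb[OF N \<xi> _ _ c1 c2, of t' s] by simp
    next
      case False
      then show ?thesis unfolding f_def by simp
    qed
  qed
  also have "(\<integral>t'. indicator {0..t} t' * c \<partial>lborel) = t * c" using t by simp
  finally have "t * c \<le> Re (Jf s N t \<xi>)" .
  then show ?thesis unfolding c_def using complex_Re_le_cmod order_trans by blast
qed

lemma q_bounds:
  fixes q s :: real
  assumes q: "1/4 \<le> q" "q \<le> 5"
  shows "5 powr (- \<bar>s\<bar>) \<le> q powr s \<and> q powr s \<le> 5 powr \<bar>s\<bar>"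
proof (cases "s \<ge> 0")
  case True
  have up: "q powr s \<le> 5 powr s" using q True by (intro powr_mono2) auto
  have "(1/4) powr s \<le> q powr s" using q True by (intro powr_mono2) auto
  moreover have "(1/4::real) powr s = 1 / 4 powr s" by (simp add: powr_divide)
  moreover have "1 / 5 powr s \<le> 1 / (4::real) powr s"
    using True by (intro divide_left_mono powr_mono2) auto
  moreover have "(5::real) powr (- s) = 1 / 5 powr s" by (simp add: powr_minus_divide)
  ultimately have lo: "5 powr (- s) \<le> q powr s" by linarith
  show ?thesis using up lo True by simp
next
  case False
  have lo: "5 powr s \<le> q powr s" using q False by (intro powr_mono2') auto
  have "q powr s \<le> (1/4) powr s" using q False by (intro powr_mono2') auto
  moreover have "(1/4::real) powr s = 4 powr (- s)" by (simp add: powr_divide powr_minus_divide)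
  moreover have "(4::real) powr (- s) \<le> 5 powr (- s)" using False by (intro powr_mono2) auto
  ultimately have up: "q powr s \<le> 5 powr (- s)" by linarith
  show ?thesis using up lo False by simp
qed

lemma weight_bounds:
  fixes N x s :: real
  assumes N: "N \<ge> 1" and x: "N/2 \<le> x" "x \<le> 2 * N"
  shows "5 powr (- \<bar>s\<bar>) * N powr (2 * s) \<le> (1 + x\<^sup>2) powr s \<and> (1 + x\<^sup>2) powr s \<le> 5 powr \<bar>s\<bar> * N powr (2 * s)"
proof -
  define q where "q = (1 + x\<^sup>2) / N\<^sup>2"
  have N2: "N\<^sup>2 > 0" using N by simp
  have eq: "1 + x\<^sup>2 = N\<^sup>2 * q" unfolding q_def using N2 by simp
  have "(N/2)\<^sup>2 \<le> x\<^sup>2" using x N by (intro power_mono) auto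
  then have "N\<^sup>2 / 4 \<le> 1 + x\<^sup>2" by (simp add: power_divide)
  then have q1: "1/4 \<le> q" unfolding q_def using N2 by (simp add: field_simps)
  have "x\<^sup>2 \<le> (2 * N)\<^sup>2" using x N by (intro power_mono) auto
  moreover have "1 \<le> N\<^sup>2" using N by (simp add: one_le_power)
  ultimately have "1 + x\<^sup>2 \<le> 5 * N\<^sup>2" by (simp add: power_mult_distrib)
  then have q2: "q \<le> 5" unfolding q_def using N2 by (simp add: field_simps)
  have qp: "q > 0" using q1 by simp
  have "(1 + x\<^sup>2) powr s = (N\<^sup>2) powr s * q powr s" unfolding eq by (rule powr_mult)
  also have "(N\<^sup>2) powr s = N powr (2 * s)"
    using N by (simp add: powr_powr[symmetric])
  finally have e: "(1 + x\<^sup>2) powr s = N powr (2 * s) * q powr s" .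
  have Np: "0 \<le> N powr (2 * s)" by simp
  from q_bounds[OF q1 q2, of s] have lo: "5 powr (- \<bar>s\<bar>) \<le> q powr s" and up: "q powr s \<le> 5 powr \<bar>s\<bar>" by auto
  have A: "5 powr (- \<bar>s\<bar>) * N powr (2 * s) \<le> N powr (2 * s) * q powr s"
    using mult_right_mono[OF lo Np] by (simp add: mult.commute)
  have B: "N powr (2 * s) * q powr s \<le> 5 powr \<bar>s\<bar> * N powr (2 * s)"
    using mult_right_mono[OF up Np] by (simp add: mult.commute)
  show ?thesis unfolding e using A B by simp
qed

lemma emeasure_D1: "N \<ge> 0 \<Longrightarrow> emeasure lborel (D1 N) = ennreal (6 * N ^ 3)"
proof -
  assume N: "N \<ge> 0"
  have "emeasure (lborel \<Otimes>\<^sub>M lborel) (D1 N) = emeasure lborel {N/2..N} * emeasure lborel {-6 * N\<^sup>2..6 * N\<^sup>2}"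
    unfolding D1_def by (intro lborel.emeasure_pair_measure_Times) auto
  also have "\<dots> = ennreal (N / 2) * ennreal (12 * N\<^sup>2)" using N by simp
  also have "\<dots> = ennreal (N / 2 * (12 * N\<^sup>2))" using N by (intro ennreal_mult[symmetric]) auto
  also have "N / 2 * (12 * N\<^sup>2) = 6 * N ^ 3" by (simp add: power2_eq_square power3_eq_cube)
  finally show ?thesis by (simp add: lborel_prod)
qed

lemma emeasure_D2: "N \<ge> 0 \<Longrightarrow> emeasure lborel (D2 N) = ennreal (N ^ 3)"
proof -
  assume N: "N \<ge> 0"
  have "emeasure (lborel \<Otimes>\<^sub>M lborel) (D2 N) = emeasure lborel {N..2 * N} * emeasure lborel {sqrt 3 * N\<^sup>2..(sqrt 3 + 1) * N\<^sup>2}"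
    unfolding D2_def by (intro lborel.emeasure_pair_measure_Times) auto
  also have "\<dots> = ennreal N * ennreal (N\<^sup>2)" using N by (simp add: algebra_simps)
  also have "\<dots> = ennreal (N * N\<^sup>2)" using N by (intro ennreal_mult[symmetric]) auto
  also have "N * N\<^sup>2 = N ^ 3" by (simp add: power2_eq_square power3_eq_cube)
  finally show ?thesis by (simp add: lborel_prod)
qed

lemma part1_bounds:
  assumes N: "N \<ge> 1"
  shows "ennreal (6 * 5 powr (- \<bar>s\<bar>)) \<le> (\<integral>\<^sup>+ \<xi>. ennreal ((1 + fst \<xi> ^ 2) powr s * (cmod (phi_hat s N \<xi>))\<^sup>2) \<partial>lborel)"
    and "(\<integral>\<^sup>+ \<xi>. ennreal ((1 + fst \<xi> ^ 2) powr s * (cmod (phi_hat s N \<xi>))\<^sup>2) \<partial>lborel) \<le> ennreal (14 * 5 powr \<bar>s\<bar>)"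
proof -
  have N0: "N \<ge> 0" using N by simp
  have Npos: "N > 0" using N by simp
  have cm: "cmod (phi_hat s N \<xi>) = ph s N \<xi>" for \<xi> unfolding phi_real using ph_nonneg[of s N \<xi>] by simp
  have pp: "N powr (-3/2 - s) * N powr (-3/2 - s) = N powr (-3 - 2 * s)" by (simp add: powr_add[symmetric])
  have p3: "N powr (2 * s) * N powr (-3 - 2 * s) = 1 / N ^ 3"
    using Npos by (simp add: powr_add[symmetric] powr_minus_divide)
  have lo: "ennreal (5 powr (- \<bar>s\<bar>) / N ^ 3) * indicator (D1 N) \<xi> \<le> ennreal ((1 + fst \<xi> ^ 2) powr s * (cmod (phi_hat s N \<xi>))\<^sup>2)" for \<xi>
  proof (cases "\<xi> \<in> D1 N")
    case True
    have fb: "N/2 \<le> fst \<xi>" "fst \<xi> \<le> 2 * N" using D_bounds[OF N0] True by auto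
    have w: "5 powr (- \<bar>s\<bar>) * N powr (2 * s) \<le> (1 + fst \<xi> ^ 2) powr s" using weight_bounds[OF N fb] by simp
    have "N powr (-3/2 - s) \<le> ph s N \<xi>" using True by (intro ph_ge) simp
    then have "N powr (-3/2 - s) * N powr (-3/2 - s) \<le> ph s N \<xi> * ph s N \<xi>" by (intro mult_mono) (auto simp: ph_nonneg)
    then have ph2: "N powr (-3 - 2 * s) \<le> (ph s N \<xi>)\<^sup>2" unfolding pp by (simp add: power2_eq_square)
    have "5 powr (- \<bar>s\<bar>) * N powr (2 * s) * N powr (-3 - 2 * s) \<le> (1 + fst \<xi> ^ 2) powr s * (ph s N \<xi>)\<^sup>2"
      using w ph2 by (intro mult_mono) auto
    moreover have "5 powr (- \<bar>s\<bar>) * N powr (2 * s) * N powr (-3 - 2 * s) = 5 powr (- \<bar>s\<bar>) / N ^ 3"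
      using p3 by (simp add: mult.assoc)
    ultimately show ?thesis using True cm by (simp add: ennreal_leI)
  qed simp
  have "(\<integral>\<^sup>+ \<xi>. ennreal (5 powr (- \<bar>s\<bar>) / N ^ 3) * indicator (D1 N) \<xi> \<partial>lborel) \<le> (\<integral>\<^sup>+ \<xi>. ennreal ((1 + fst \<xi> ^ 2) powr s * (cmod (phi_hat s N \<xi>))\<^sup>2) \<partial>lborel)"
    by (intro nn_integral_mono lo)
  moreover have "(\<integral>\<^sup>+ \<xi>. ennreal (5 powr (- \<bar>s\<bar>) / N ^ 3) * indicator (D1 N) \<xi> \<partial>lborel) = ennreal (6 * 5 powr (- \<bar>s\<bar>))"
  proof -
    have "(\<integral>\<^sup>+ \<xi>. ennreal (5 powr (- \<bar>s\<bar>) / N ^ 3) * indicator (D1 N) \<xi> \<partial>lborel) = ennreal (5 powr (- \<bar>s\<bar>) / N ^ 3) * ennreal (6 * N ^ 3)"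
      using emeasure_D1[OF N0] by (subst nn_integral_cmult_indicator) auto
    also have "\<dots> = ennreal (5 powr (- \<bar>s\<bar>) / N ^ 3 * (6 * N ^ 3))" using N0 by (intro ennreal_mult[symmetric]) auto
    also have "5 powr (- \<bar>s\<bar>) / N ^ 3 * (6 * N ^ 3) = 6 * 5 powr (- \<bar>s\<bar>)" using Npos by simp
    finally show ?thesis .
  qed
  ultimately show "ennreal (6 * 5 powr (- \<bar>s\<bar>)) \<le> (\<integral>\<^sup>+ \<xi>. ennreal ((1 + fst \<xi> ^ 2) powr s * (cmod (phi_hat s N \<xi>))\<^sup>2) \<partial>lborel)"
    by simp
  have up: "ennreal ((1 + fst \<xi> ^ 2) powr s * (cmod (phi_hat s N \<xi>))\<^sup>2) \<le> ennreal (2 * 5 powr \<bar>s\<bar> / N ^ 3) * (indicator (D1 N) \<xi> + indicator (D2 N) \<xi>)" for \<xi>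
  proof (cases "\<xi> \<in> D1 N \<or> \<xi> \<in> D2 N")
    case True
    have fb: "N/2 \<le> fst \<xi>" "fst \<xi> \<le> 2 * N" using D_bounds[OF N0] True by auto
    have w: "(1 + fst \<xi> ^ 2) powr s \<le> 5 powr \<bar>s\<bar> * N powr (2 * s)" using weight_bounds[OF N fb] by simp
    define i where "i = indicator (D1 N) \<xi> + (indicator (D2 N) \<xi> :: real)"
    have i: "i * i \<le> 2 * i" "0 \<le> i" unfolding i_def by (auto simp: indicator_def)
    have "(ph s N \<xi>)\<^sup>2 = N powr (-3 - 2 * s) * (i * i)"
      unfolding ph_def i_def[symmetric] pp[symmetric] by (simp add: power2_eq_square mult_ac)
    also have "\<dots> \<le> N powr (-3 - 2 * s) * (2 * i)" using i by (intro mult_left_mono) auto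
    finally have ph2: "(ph s N \<xi>)\<^sup>2 \<le> N powr (-3 - 2 * s) * (2 * i)" .
    have "(1 + fst \<xi> ^ 2) powr s * (ph s N \<xi>)\<^sup>2 \<le> (5 powr \<bar>s\<bar> * N powr (2 * s)) * (N powr (-3 - 2 * s) * (2 * i))"
      using w ph2 by (intro mult_mono) auto
    also have "\<dots> = 5 powr \<bar>s\<bar> * (N powr (2 * s) * N powr (-3 - 2 * s)) * (2 * i)" by (simp only: mult_ac)
    also have "\<dots> = 2 * 5 powr \<bar>s\<bar> / N ^ 3 * i" unfolding p3 by simp
    finally have "(1 + fst \<xi> ^ 2) powr s * (ph s N \<xi>)\<^sup>2 \<le> 2 * 5 powr \<bar>s\<bar> / N ^ 3 * i" .
    then have "ennreal ((1 + fst \<xi> ^ 2) powr s * (ph s N \<xi>)\<^sup>2) \<le> ennreal (2 * 5 powr \<bar>s\<bar> / N ^ 3 * i)"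
      by (rule ennreal_leI)
    also have "\<dots> = ennreal (2 * 5 powr \<bar>s\<bar> / N ^ 3) * ennreal i" using i Npos by (intro ennreal_mult) auto
    also have "ennreal i = indicator (D1 N) \<xi> + indicator (D2 N) \<xi>" unfolding i_def by (auto simp: indicator_def)
    finally show ?thesis using cm by simp
  next
    case False
    then have "ph s N \<xi> = 0" by (simp add: ph_zero)
    then show ?thesis using cm by simp
  qed
  have "(\<integral>\<^sup>+ \<xi>. ennreal ((1 + fst \<xi> ^ 2) powr s * (cmod (phi_hat s N \<xi>))\<^sup>2) \<partial>lborel)
      \<le> (\<integral>\<^sup>+ \<xi>. ennreal (2 * 5 powr \<bar>s\<bar> / N ^ 3) * (indicator (D1 N) \<xi> + indicator (D2 N) \<xi>) \<partial>lborel)"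
    by (intro nn_integral_mono up)
  also have "\<dots> = ennreal (2 * 5 powr \<bar>s\<bar> / N ^ 3) * (emeasure lborel (D1 N) + emeasure lborel (D2 N))"
    by (simp add: nn_integral_cmult nn_integral_add distrib_left)
  also have "\<dots> = ennreal (2 * 5 powr \<bar>s\<bar> / N ^ 3) * ennreal (7 * N ^ 3)"
    using N0 by (simp add: emeasure_D1 emeasure_D2 ennreal_plus[symmetric] del: ennreal_plus)
  also have "\<dots> = ennreal (2 * 5 powr \<bar>s\<bar> / N ^ 3 * (7 * N ^ 3))" using N0 by (intro ennreal_mult[symmetric]) auto
  also have "2 * 5 powr \<bar>s\<bar> / N ^ 3 * (7 * N ^ 3) = 14 * 5 powr \<bar>s\<bar>" using Npos by simp
  finally show "(\<integral>\<^sup>+ \<xi>. ennreal ((1 + fst \<xi> ^ 2) powr s * (cmod (phi_hat s N \<xi>))\<^sup>2) \<partial>lborel) \<le> ennreal (14 * 5 powr \<bar>s\<bar>)" .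
qed

lemma norm_u2: "norm (u2_hat (phi_hat s N) t \<xi>) = \<bar>fst \<xi>\<bar> * (1 / (4 * pi\<^sup>2)) * norm (Jf s N t \<xi>)"
  unfolding u2_eq norm_minus_cancel norm_mult norm_ii norm_of_real by simp

lemma Box_bounded: "bounded (Box N)"
  unfolding Box_def by (intro bounded_Times bounded_closed_interval)

lemma Box_sets[measurable]: "Box N \<in> sets borel"
  unfolding Box_def by (intro borel_closed closed_Times closed_atLeastAtMost)

lemma Rg_sets[measurable]: "Rg N \<in> sets borel"
  unfolding Rg_def by (intro borel_closed closed_Times closed_atLeastAtMost)

lemma emeasure_Rg: "N \<ge> 0 \<Longrightarrow> emeasure lborel (Rg N) = ennreal (N / 4 * N\<^sup>2)"
proof -
  assume N: "N \<ge> 0"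
  have "emeasure (lborel \<Otimes>\<^sub>M lborel) (Rg N) = emeasure lborel {7 * N / 4..2 * N} * emeasure lborel {2 * N\<^sup>2..3 * N\<^sup>2}"
    unfolding Rg_def by (intro lborel.emeasure_pair_measure_Times) auto
  also have "\<dots> = ennreal (N / 4) * ennreal (N\<^sup>2)" using N by simp
  also have "\<dots> = ennreal (N / 4 * N\<^sup>2)" using N by (intro ennreal_mult[symmetric]) auto
  finally show ?thesis by (simp add: lborel_prod)
qed

lemma u2_finite:
  assumes N: "N \<ge> 1" and t: "t \<ge> 0"
  shows "(\<integral>\<^sup>+ \<xi>. ennreal ((1 + fst \<xi> ^ 2) powr s * (cmod (u2_hat (phi_hat s N) t \<xi>))\<^sup>2) \<partial>lborel) < \<infinity>"
proof -
  define B0 where "B0 = 2 * N powr (-3/2 - s) * PI s N"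
  have B0: "0 \<le> B0" unfolding B0_def using Kf_bound[of s N 0 0] norm_ge_zero order_trans by blast
  define Cb where "Cb = (1 + 16 * N\<^sup>2) powr \<bar>s\<bar> * (4 * N * (1 / (4 * pi\<^sup>2)) * (t * B0))\<^sup>2"
  have N0: "N \<ge> 0" using N by simp
  have pw: "ennreal ((1 + fst \<xi> ^ 2) powr s * (cmod (u2_hat (phi_hat s N) t \<xi>))\<^sup>2) \<le> ennreal Cb * indicator (Box N) \<xi>" for \<xi>
  proof (cases "\<xi> \<in> Box N")
    case False
    then show ?thesis by (simp add: norm_u2 Jf_zero[OF N0])
  next
    case True
    have f: "N \<le> fst \<xi>" "fst \<xi> \<le> 4 * N" using True by (auto simp: Box_def mem_Times_iff)
    have f2: "fst \<xi> ^ 2 \<le> 16 * N\<^sup>2"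
    proof -
      have "fst \<xi> ^ 2 \<le> (4 * N) ^ 2" using f N by (intro power_mono) auto
      then show ?thesis by (simp add: power_mult_distrib)
    qed
    have "(1 + fst \<xi> ^ 2) powr s \<le> (1 + fst \<xi> ^ 2) powr \<bar>s\<bar>" by (intro powr_mono) auto
    also have "\<dots> \<le> (1 + 16 * N\<^sup>2) powr \<bar>s\<bar>" using f2 by (intro powr_mono2) auto
    finally have w: "(1 + fst \<xi> ^ 2) powr s \<le> (1 + 16 * N\<^sup>2) powr \<bar>s\<bar>" .
    have "cmod (u2_hat (phi_hat s N) t \<xi>) \<le> 4 * N * (1 / (4 * pi\<^sup>2)) * (t * B0)"
      unfolding norm_u2 B0_def using f N Jf_bound[OF t, of s N \<xi>]
      by (intro mult_mono) auto
    then have u: "(cmod (u2_hat (phi_hat s N) t \<xi>))\<^sup>2 \<le> (4 * N * (1 / (4 * pi\<^sup>2)) * (t * B0))\<^sup>2"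
      by (intro power_mono) auto
    have "(1 + fst \<xi> ^ 2) powr s * (cmod (u2_hat (phi_hat s N) t \<xi>))\<^sup>2 \<le> Cb"
      unfolding Cb_def using w u by (intro mult_mono) auto
    then show ?thesis using True by (simp add: ennreal_leI)
  qed
  have "(\<integral>\<^sup>+ \<xi>. ennreal ((1 + fst \<xi> ^ 2) powr s * (cmod (u2_hat (phi_hat s N) t \<xi>))\<^sup>2) \<partial>lborel)
      \<le> (\<integral>\<^sup>+ \<xi>. ennreal Cb * indicator (Box N) \<xi> \<partial>lborel)"
    by (intro nn_integral_mono pw)
  also have "\<dots> = ennreal Cb * emeasure lborel (Box N)" by (simp add: nn_integral_cmult_indicator)
  also have "\<dots> < \<infinity>" using emeasure_bounded_finite[OF Box_bounded, of N] by (simp add: ennreal_mult_less_top)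
  finally show ?thesis .
qed

lemma powr_alg:
  fixes N e s c :: real
  assumes N: "N > 0"
  shows "5 powr (- \<bar>s\<bar>) * N powr (2 * s) * (7 * N / 4 * c * (N powr (-3 - e) * (N powr (-3 - 2 * s) * (N / 4 * N\<^sup>2) / 2)))\<^sup>2 * (N / 4 * N\<^sup>2)
    = 5 powr (- \<bar>s\<bar>) * (7 / 32)\<^sup>2 * c\<^sup>2 / 4 * N powr (-1 - 2 * e - 2 * s)"
proof -
  have n1: "N = N powr 1" using N by simp
  have n2: "N\<^sup>2 = N powr 2" using N by simp
  have "7 * N / 4 * c * (N powr (-3 - e) * (N powr (-3 - 2 * s) * (N / 4 * N\<^sup>2) / 2))
      = 7 / 32 * c * (N powr 1 * N powr (-3 - e) * N powr (-3 - 2 * s) * N powr 1 * N powr 2)"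
    by (subst (1 2) n1, subst n2) (simp add: field_simps)
  also have "N powr 1 * N powr (-3 - e) * N powr (-3 - 2 * s) * N powr 1 * N powr 2 = N powr (-2 - e - 2 * s)"
    unfolding powr_add[symmetric] by (rule arg_cong[where f="\<lambda>x. N powr x"]) simp
  finally have L: "7 * N / 4 * c * (N powr (-3 - e) * (N powr (-3 - 2 * s) * (N / 4 * N\<^sup>2) / 2)) = 7 / 32 * c * N powr (-2 - e - 2 * s)" .
  have "5 powr (- \<bar>s\<bar>) * N powr (2 * s) * (7 / 32 * c * N powr (-2 - e - 2 * s))\<^sup>2 * (N / 4 * N\<^sup>2)
      = 5 powr (- \<bar>s\<bar>) * (7 / 32)\<^sup>2 * c\<^sup>2 / 4 * (N powr (2 * s) * N powr (-2 - e - 2 * s) * N powr (-2 - e - 2 * s) * N powr 1 * N powr 2)"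
    by (subst (3) n1, subst n2) (simp add: power2_eq_square field_simps)
  also have "N powr (2 * s) * N powr (-2 - e - 2 * s) * N powr (-2 - e - 2 * s) * N powr 1 * N powr 2 = N powr (-1 - 2 * e - 2 * s)"
    unfolding powr_add[symmetric] by (rule arg_cong[where f="\<lambda>x. N powr x"]) simp
  finally show ?thesis unfolding L .
qed

lemma u2_lower:
  assumes N: "N \<ge> 1" and t: "t = N powr (-3 - e)"
    and c1: "160 * t * N ^ 3 \<le> 1/2" and c2: "8 * N\<^sup>2 * t \<le> 1/4"
  shows "ennreal (5 powr (- \<bar>s\<bar>) * (7 / 32)\<^sup>2 * (1 / (4 * pi\<^sup>2))\<^sup>2 / 4 * N powr (-1 - 2 * e - 2 * s))
     \<le> (\<integral>\<^sup>+ \<xi>. ennreal ((1 + fst \<xi> ^ 2) powr s * (cmod (u2_hat (phi_hat s N) t \<xi>))\<^sup>2) \<partial>lborel)"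
proof -
  have Npos: "N > 0" using N by simp
  have N0: "N \<ge> 0" using N by simp
  have t0: "0 \<le> t" unfolding t by simp
  define c0 where "c0 = 1 / (4 * pi\<^sup>2)"
  have c0p: "0 < c0" unfolding c0_def by simp
  define lowc where "lowc = N powr (-3 - 2 * s) * (N / 4 * N\<^sup>2) / 2"
  have lowc: "0 \<le> lowc" unfolding lowc_def using N0 by simp
  define L0 where "L0 = 7 * N / 4 * c0 * (t * lowc)"
  have L0: "0 \<le> L0" unfolding L0_def using N0 c0p t0 lowc by simp
  define V0 where "V0 = 5 powr (- \<bar>s\<bar>) * N powr (2 * s) * L0\<^sup>2"
  have pw: "ennreal V0 * indicator (Rg N) \<xi> \<le> ennreal ((1 + fst \<xi> ^ 2) powr s * (cmod (u2_hat (phi_hat s N) t \<xi>))\<^sup>2)" for \<xi>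
  proof (cases "\<xi> \<in> Rg N")
    case True
    have f: "7 * N / 4 \<le> fst \<xi>" "fst \<xi> \<le> 2 * N" using True by (auto simp: Rg_def mem_Times_iff)
    have J: "t * lowc \<le> norm (Jf s N t \<xi>)" unfolding lowc_def by (rule Jf_lb[OF Npos True t0 c1 c2])
    have "L0 \<le> cmod (u2_hat (phi_hat s N) t \<xi>)"
      unfolding L0_def norm_u2 c0_def[symmetric] using f J N0 c0p t0 lowc
      by (intro mult_mono) auto
    then have u: "L0\<^sup>2 \<le> (cmod (u2_hat (phi_hat s N) t \<xi>))\<^sup>2" using L0 by (intro power_mono) auto
    have w: "5 powr (- \<bar>s\<bar>) * N powr (2 * s) \<le> (1 + fst \<xi> ^ 2) powr s"
      using weight_bounds[OF N, of "fst \<xi>" s] f N0 by simp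
    have "V0 \<le> (1 + fst \<xi> ^ 2) powr s * (cmod (u2_hat (phi_hat s N) t \<xi>))\<^sup>2"
      unfolding V0_def using w u by (intro mult_mono) auto
    then show ?thesis using True by (simp add: ennreal_leI)
  qed simp
  have "(\<integral>\<^sup>+ \<xi>. ennreal V0 * indicator (Rg N) \<xi> \<partial>lborel) \<le> (\<integral>\<^sup>+ \<xi>. ennreal ((1 + fst \<xi> ^ 2) powr s * (cmod (u2_hat (phi_hat s N) t \<xi>))\<^sup>2) \<partial>lborel)"
    by (intro nn_integral_mono pw)
  moreover have "(\<integral>\<^sup>+ \<xi>. ennreal V0 * indicator (Rg N) \<xi> \<partial>lborel) = ennreal (V0 * (N / 4 * N\<^sup>2))"
  proof -
    have "(\<integral>\<^sup>+ \<xi>. ennreal V0 * indicator (Rg N) \<xi> \<partial>lborel) = ennreal V0 * ennreal (N / 4 * N\<^sup>2)"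
      using emeasure_Rg[OF N0] by (subst nn_integral_cmult_indicator) auto
    also have "\<dots> = ennreal (V0 * (N / 4 * N\<^sup>2))" using N0 unfolding V0_def by (intro ennreal_mult[symmetric]) auto
    finally show ?thesis .
  qed
  moreover have "V0 * (N / 4 * N\<^sup>2) = 5 powr (- \<bar>s\<bar>) * (7 / 32)\<^sup>2 * c0\<^sup>2 / 4 * N powr (-1 - 2 * e - 2 * s)"
    unfolding V0_def L0_def lowc_def t using powr_alg[OF Npos, of s c0 e] by simp
  ultimately show ?thesis unfolding c0_def by simp
qed

lemma conds:
  fixes N e :: real
  assumes e: "0 < e" and N: "N \<ge> max 32 (320 powr (1 / e))"
  shows "160 * N powr (-3 - e) * N ^ 3 \<le> 1/2" "8 * N\<^sup>2 * N powr (-3 - e) \<le> 1/4"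
proof -
  have N32: "N \<ge> 32" using N by simp
  have Npos: "N > 0" using N32 by simp
  have "(320 powr (1 / e)) powr e \<le> N powr e" using N e by (intro powr_mono2) auto
  moreover have "(320 powr (1 / e)) powr e = (320::real)" using e by (simp add: powr_powr)
  ultimately have Ne: "320 \<le> N powr e" by simp
  have "N powr (-3 - e) * N ^ 3 = N powr (-3 - e) * N powr 3" using Npos by simp
  also have "\<dots> = N powr (- e)" unfolding powr_add[symmetric] by simp
  also have "\<dots> = 1 / N powr e" by (simp add: powr_minus_divide)
  also have "1 / N powr e \<le> 1 / 320" using Ne by (intro divide_left_mono) auto
  finally have "N powr (-3 - e) * N ^ 3 \<le> 1 / 320" .
  then show "160 * N powr (-3 - e) * N ^ 3 \<le> 1/2" by simp
  have "N\<^sup>2 * N powr (-3 - e) = N powr 2 * N powr (-3 - e)" using Npos by simp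
  also have "\<dots> = N powr (-1 - e)" unfolding powr_add[symmetric] by simp
  also have "\<dots> \<le> N powr (-1)" using e N32 by (intro powr_mono) auto
  also have "\<dots> = 1 / N" using Npos by (simp add: powr_minus_divide)
  also have "\<dots> \<le> 1 / 32" using N32 by (simp add: frac_le)
  finally show "8 * N\<^sup>2 * N powr (-3 - e) \<le> 1/4" by simp
qed

theorem mainTheorem14:
  fixes s eps0 :: real
  assumes "0 < eps0" and "eps0 < 1"
  shows "(\<exists>C>0. \<forall>N\<ge>1. 1 / C \<le> Hs0_norm s (phi_hat s N) \<and> Hs0_norm s (phi_hat s N) \<le> C)
       \<and> (\<exists>C>0. \<exists>N0. \<forall>N\<ge>N0.
            (Hs0_norm s (u2_hat (phi_hat s N) (N powr (- 3 - eps0))))\<^sup>2 \<ge> C * N powr (- 1 - 2 * eps0 - 2 * s))"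
proof (intro conjI)
  define w where "w = 5 powr \<bar>s\<bar>"
  have w1: "1 \<le> w" unfolding w_def by (rule ge_one_powr_ge_zero) auto
  have wm: "5 powr (- \<bar>s\<bar>) = 1 / w" unfolding w_def by (simp add: powr_minus_divide)
  show "\<exists>C>0. \<forall>N\<ge>1. 1 / C \<le> Hs0_norm s (phi_hat s N) \<and> Hs0_norm s (phi_hat s N) \<le> C"
  proof (intro exI[of _ "4 * w"] conjI allI impI)
    show "0 < 4 * w" using w1 by simp
    fix N :: real assume N: "1 \<le> N"
    let ?I = "\<integral>\<^sup>+ \<xi>. ennreal ((1 + fst \<xi> ^ 2) powr s * (cmod (phi_hat s N \<xi>))\<^sup>2) \<partial>lborel"
    have lo: "ennreal (6 / w) \<le> ?I" using part1_bounds(1)[OF N, of s] wm by simp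
    have up: "?I \<le> ennreal (14 * w)" using part1_bounds(2)[OF N, of s] unfolding w_def .
    have fin: "?I < top" using up by (rule le_less_trans) simp
    have r_up: "enn2real ?I \<le> 14 * w" using up w1 by (intro enn2real_leI) auto
    have r_lo: "6 / w \<le> enn2real ?I"
      using enn2real_mono[OF lo fin] w1 by simp
    have H: "Hs0_norm s (phi_hat s N) = sqrt (enn2real ?I)" unfolding Hs0_norm_def ..
    show "Hs0_norm s (phi_hat s N) \<le> 4 * w"
      unfolding H
    proof (rule real_le_lsqrt)
      show "0 \<le> 4 * w" using w1 by simp
      have "14 * w \<le> (4 * w)\<^sup>2" using w1 by (simp add: power2_eq_square mult_right_mono)
      then show "enn2real ?I \<le> (4 * w)\<^sup>2" using r_up by linarith
    qed
    show "1 / (4 * w) \<le> Hs0_norm s (phi_hat s N)"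
      unfolding H
    proof (rule real_le_rsqrt)
      have "(1 / (4 * w))\<^sup>2 = 1 / (16 * w * w)" by (simp add: power2_eq_square)
      also have "\<dots> \<le> 6 / w" using w1 by (simp add: field_simps)
      finally show "(1 / (4 * w))\<^sup>2 \<le> enn2real ?I" using r_lo by linarith
    qed
  qed
  define C where "C = 5 powr (- \<bar>s\<bar>) * (7 / 32)\<^sup>2 * (1 / (4 * pi\<^sup>2))\<^sup>2 / 4"
  show "\<exists>C>0. \<exists>N0. \<forall>N\<ge>N0. (Hs0_norm s (u2_hat (phi_hat s N) (N powr (- 3 - eps0))))\<^sup>2 \<ge> C * N powr (- 1 - 2 * eps0 - 2 * s)"
  proof (rule exI[of _ C], intro conjI)
    show C0: "0 < C" unfolding C_def by simp
    show "\<exists>N0. \<forall>N\<ge>N0. (Hs0_norm s (u2_hat (phi_hat s N) (N powr (- 3 - eps0))))\<^sup>2 \<ge> C * N powr (- 1 - 2 * eps0 - 2 * s)"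
    proof (intro exI[of _ "max 32 (320 powr (1 / eps0))"] allI impI)
    fix N :: real assume N: "max 32 (320 powr (1 / eps0)) \<le> N"
    have N1: "N \<ge> 1" using N by simp
    define t where "t = N powr (- 3 - eps0)"
    have c: "160 * t * N ^ 3 \<le> 1/2" "8 * N\<^sup>2 * t \<le> 1/4" unfolding t_def using conds[OF assms(1) N] by auto
    let ?I = "\<integral>\<^sup>+ \<xi>. ennreal ((1 + fst \<xi> ^ 2) powr s * (cmod (u2_hat (phi_hat s N) t \<xi>))\<^sup>2) \<partial>lborel"
    have lo: "ennreal (C * N powr (- 1 - 2 * eps0 - 2 * s)) \<le> ?I"
      using u2_lower[OF N1 t_def c] unfolding C_def by simp
    have fin: "?I < top" using u2_finite[OF N1, of t s] by (simp add: t_def)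
    have "C * N powr (- 1 - 2 * eps0 - 2 * s) \<le> enn2real ?I"
      using enn2real_mono[OF lo fin] C0 by simp
    moreover have "(Hs0_norm s (u2_hat (phi_hat s N) t))\<^sup>2 = enn2real ?I"
      unfolding Hs0_norm_def by simp
    ultimately have "C * N powr (- 1 - 2 * eps0 - 2 * s) \<le> (Hs0_norm s (u2_hat (phi_hat s N) t))\<^sup>2"
      by simp
    then show "C * N powr (- 1 - 2 * eps0 - 2 * s) \<le> (Hs0_norm s (u2_hat (phi_hat s N) (N powr (- 3 - eps0))))\<^sup>2"
      unfolding t_def .
  qed
  qed
qed

end
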